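(* For $\mathbf{x}\in\mathrm{Mat}_{m\times n}(\mathbb{C}^* )$ with $\mathrm{gRSK}(\mathbf{x})=(P,Q)$, the central charge $\Delta(\mathbf{x})=F(\mathbf{x})-F(P)$ of the $\mathrm{GL}_n$-geometric crystal $(X_n)^m$ satisfies $\Delta(\mathbf{x})=F(Q)+\delta_{m,n}z_{n,n}$, where $\delta_{m,n}$ is the Kronecker delta and (when $m=n$) $z_{n,n}$ is the last part of the common shape of $P$ and $Q$. In particular, $\Delta$ is positive, i.e. it is a rational function admitting an expression as a ratio of polynomials with nonnegative real coefficients.
   Context: $F(\mathbf{x})=\sum_{i\in[m],j\in[n]}x_i^j$. For $N,K\ge1$, $\mathrm{GT}_N^{\le K}$ is the torus of arrays $(z_{i,j})$, $1\le i\le K$, $i\le j\le N$, and its decoration is $F(\mathbf{z})=\sum_{1\le i\le K,\,i\le j\le N-1}\frac{z_{i,j+1}}{z_{i,j}}+\sum_{1\le i\le K-1,\,i\le j\le N-1}\frac{z_{i,j}}{z_{i+1,j+1}}+\mathbb{1}_{K<N}z_{K,K}$. Geometric RSK: with rows $\mathbf{x}_a$, $W(y_1,\dots,y_n)$ the $n\times n$ matrix with diagonal $y_1,\dots,y_n$, $1$'s directly below, $0$ elsewhere, $M(\mathbf{x}_1,\dots,\mathbf{x}_k)=W(\mathbf{x}_1)\cdots W(\mathbf{x}_k)$, and $\Delta_I$ the minor with rows $I$, columns $[1,|I|]$ ($\Delta_\emptyset=1$): $P=(z_{i,j})\in\mathrm{GT}_n^{\le m}$ with $z_{i,j}=\Delta_{[i,j]}(M(\mathbf{x}_1,\dots,\mathbf{x}_m))/\Delta_{[i+1,j]}(M(\mathbf{x}_1,\dots,\mathbf{x}_m))$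 and $Q=(z'_{j',i'})\in\mathrm{GT}_m^{\le n}$ with $z'_{j',i'}=\Delta_{[j',n]}(M(\mathbf{x}_1,\dots,\mathbf{x}_{i'}))/\Delta_{[j'+1,n]}(M(\mathbf{x}_1,\dots,\mathbf{x}_{i'}))$ ($1\le j'\le n$, $j'\le i'\le m$). The paper identifies $F(\mathbf{x})-F(P)$ with Berenstein–Kazhdan's central charge on $(X_n)^m$. *)

theory Defs
  imports Complex_Main "Jordan_Normal_Form.Determinant"
begin

text \<open>A matrix x in Mat_{m x n}(C^*) is a function x :: nat => nat => complex,
  x a j = x_a^j, for 1 <= a <= m, 1 <= j <= n (rows x_a). Arrays in GT are functions
  z :: nat => nat => complex, z i j = z_{i,j}, 1-indexed.\<close>

definition Wmat :: "nat \<Rightarrow> (nat \<Rightarrow> complex) \<Rightarrow> complex mat" where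
  "Wmat n y = mat n n (\<lambda>(r, c). if r = c then y (r + 1) else if r = c + 1 then 1 else 0)"

fun Mprod :: "nat \<Rightarrow> (nat \<Rightarrow> nat \<Rightarrow> complex) \<Rightarrow> nat \<Rightarrow> complex mat" where
  "Mprod n x 0 = 1\<^sub>m n"
| "Mprod n x (Suc k) = Mprod n x k * Wmat n (x (Suc k))"

text \<open>Delta_{[a,b]}(A): minor with rows a..b and columns 1..(b-a+1) (1-indexed);
  the empty minor (a > b) is 1.\<close>
definition minor_int :: "nat \<Rightarrow> nat \<Rightarrow> complex mat \<Rightarrow> complex" where
  "minor_int a b A = det (mat (b + 1 - a) (b + 1 - a) (\<lambda>(r, c). A $$ (a - 1 + r, c)))"

text \<open>gRSK: P = (z_{i,j}) in GT_n^{<= m}, Q = (z'_{j',i'}) in GT_m^{<= n}.\<close>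
definition gRSK_P :: "nat \<Rightarrow> nat \<Rightarrow> (nat \<Rightarrow> nat \<Rightarrow> complex) \<Rightarrow> nat \<Rightarrow> nat \<Rightarrow> complex" where
  "gRSK_P m n x i j = minor_int i j (Mprod n x m) / minor_int (i + 1) j (Mprod n x m)"

definition gRSK_Q :: "nat \<Rightarrow> nat \<Rightarrow> (nat \<Rightarrow> nat \<Rightarrow> complex) \<Rightarrow> nat \<Rightarrow> nat \<Rightarrow> complex" where
  "gRSK_Q m n x j' i' = minor_int j' n (Mprod n x i') / minor_int (j' + 1) n (Mprod n x i')"

definition F_GT :: "nat \<Rightarrow> nat \<Rightarrow> (nat \<Rightarrow> nat \<Rightarrow> complex) \<Rightarrow> complex" where
  "F_GT N K z =
     (\<Sum>i = 1..K. \<Sum>j = i..N - 1. z i (j + 1) / z i j)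
   + (\<Sum>i = 1..K - 1. \<Sum>j = i..N - 1. z i j / z (i + 1) (j + 1))
   + (if K < N then z K K else 0)"

definition F_mat :: "nat \<Rightarrow> nat \<Rightarrow> (nat \<Rightarrow> nat \<Rightarrow> complex) \<Rightarrow> complex" where
  "F_mat m n x = (\<Sum>i = 1..m. \<Sum>j = 1..n. x i j)"

definition central_charge :: "nat \<Rightarrow> nat \<Rightarrow> (nat \<Rightarrow> nat \<Rightarrow> complex) \<Rightarrow> complex" where
  "central_charge m n x = F_mat m n x - F_GT n m (gRSK_P m n x)"

definition gRSK_defined :: "nat \<Rightarrow> nat \<Rightarrow> (nat \<Rightarrow> nat \<Rightarrow> complex) \<Rightarrow> bool" where
  "gRSK_defined m n x \<longleftrightarrow>
     (\<forall>i j. 1 \<le> i \<and> i \<le> m \<and> i \<le> j \<and> j \<le> n \<longrightarrow>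
        minor_int i j (Mprod n x m) \<noteq> 0 \<and> minor_int (i + 1) j (Mprod n x m) \<noteq> 0)
   \<and> (\<forall>j' i'. 1 \<le> j' \<and> j' \<le> n \<and> j' \<le> i' \<and> i' \<le> m \<longrightarrow>
        minor_int j' n (Mprod n x i') \<noteq> 0 \<and> minor_int (j' + 1) n (Mprod n x i') \<noteq> 0)"

text \<open>Polynomials in the variables x_a^j (1 <= a <= m, 1 <= j <= n) with real coefficients:
  a coefficient function on exponent arrays, finitely supported, supported on exponent arrays
  vanishing outside [1,m] x [1,n].\<close>
definition is_poly :: "nat \<Rightarrow> nat \<Rightarrow> ((nat \<Rightarrow> nat \<Rightarrow> nat) \<Rightarrow> real) \<Rightarrow> bool" where
  "is_poly m n p \<longleftrightarrow> finite {e. p e \<noteq> 0} \<and>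
     (\<forall>e. p e \<noteq> 0 \<longrightarrow> (\<forall>a j. \<not> (1 \<le> a \<and> a \<le> m \<and> 1 \<le> j \<and> j \<le> n) \<longrightarrow> e a j = 0))"

definition poly_eval :: "nat \<Rightarrow> nat \<Rightarrow> ((nat \<Rightarrow> nat \<Rightarrow> nat) \<Rightarrow> real) \<Rightarrow> (nat \<Rightarrow> nat \<Rightarrow> complex) \<Rightarrow> complex" where
  "poly_eval m n p x = (\<Sum>e\<in>{e. p e \<noteq> 0}. of_real (p e) * (\<Prod>a = 1..m. \<Prod>j = 1..n. x a j ^ e a j))"

definition nonneg_poly :: "nat \<Rightarrow> nat \<Rightarrow> ((nat \<Rightarrow> nat \<Rightarrow> nat) \<Rightarrow> real) \<Rightarrow> bool" where
  "nonneg_poly m n p \<longleftrightarrow> is_poly m n p \<and> (\<forall>e. p e \<ge> 0)"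

end

theory Submission
  imports Defs "HOL-Library.FuncSet"
begin


lemma sum_upto_if:
  fixes f :: "nat \<Rightarrow> 'a::comm_monoid_add"
  assumes "s \<le> r"
  shows "(\<Sum>i=1..s. f i) = (\<Sum>i=1..r. if i \<le> s then f i else 0)"
proof -
  have "(\<Sum>i=1..r. if i \<le> s then f i else 0) = sum f ({1..r} \<inter> {i. i \<le> s})"
    by (simp add: sum.If_cases)
  also have "{1..r} \<inter> {i. i \<le> s} = {1..s}" using assms by auto
  finally show ?thesis by simp
qed

lemma local_alg:
  fixes a b c d V :: "nat \<Rightarrow> complex" and y :: complex and m J r :: nat
  assumes m2: "m \<ge> 2" and J2: "J \<ge> 2" and r: "r = min m J"
  and hV1: "V 1 = y"
  and hVi: "\<And>i. 2 \<le> i \<Longrightarrow> i \<le> r \<Longrightarrow> V i = (a (i-1) + c (i-1)) / b (i-1)"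
  and hdu: "\<And>i. 1 \<le> i \<Longrightarrow> i \<le> r \<Longrightarrow> \<not> (m = J \<and> i = J) \<Longrightarrow>
      d i * ((if i \<le> min J (m-1) then 1 / a i else 0) + (if i \<le> min m (J-1) then 1 / c i else 0)) = V i"
  and hdJ: "m = J \<Longrightarrow> d J = V J"
  and dnz: "\<And>i. 1 \<le> i \<Longrightarrow> i \<le> r \<Longrightarrow> d i \<noteq> 0"
  and bnz: "\<And>i. 1 \<le> i \<Longrightarrow> i < r \<Longrightarrow> b i \<noteq> 0"
  shows "y = (\<Sum>i=1..min m (J-1). d i / c i) + (\<Sum>i=1..min (m-1) (J-1). c i / d (i+1))
     - (\<Sum>i=1..min (m-1) (J-1). a i / b i) - (\<Sum>i=1..min (m-2) (J-1). b i / a (i+1))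
     + (\<Sum>i=1..min J (m-1). d i / a i) + (\<Sum>i=1..min (J-1) (m-1). a i / d (i+1))
     - (\<Sum>i=1..min (J-1) (m-1). c i / b i) - (\<Sum>i=1..min (J-2) (m-1). b i / c (i+1))
     + (if m = J then d J - b (J-1) else 0)"
proof -
  define u where "u i = (if i \<le> min J (m-1) then 1 / a i else 0) + (if i \<le> min m (J-1) then 1 / c i else 0)" for i
  define r' where "r' = r - 1"
  have r': "r = Suc r'" using r m2 J2 unfolding r'_def by auto
  have r1: "r' \<ge> 1" using r m2 J2 r' by auto
  have mr: "min (m-1) (J-1) = r'" "min (J-1) (m-1) = r'" using r r' by auto
  have g1: "(\<Sum>i=1..min m (J-1). d i / c i) + (\<Sum>i=1..min J (m-1). d i / a i) = (\<Sum>i=1..r. d i * u i)"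
  proof -
    have "(\<Sum>i=1..min m (J-1). d i / c i) = (\<Sum>i=1..r. if i \<le> min m (J-1) then d i / c i else 0)"
      by (rule sum_upto_if) (use r in auto)
    moreover have "(\<Sum>i=1..min J (m-1). d i / a i) = (\<Sum>i=1..r. if i \<le> min J (m-1) then d i / a i else 0)"
      by (rule sum_upto_if) (use r in auto)
    moreover have "(\<Sum>i=1..r. d i * u i) = (\<Sum>i=1..r. (if i \<le> min m (J-1) then d i / c i else 0) + (if i \<le> min J (m-1) then d i / a i else 0))"
      by (rule sum.cong) (auto simp: u_def distrib_left)
    ultimately show ?thesis by (simp add: sum.distrib)
  qed
  have g1b: "(\<Sum>i=1..r. d i * u i) = y + (\<Sum>i=1..r'. (a i + c i) / b i) - (if m = J then V J else 0)"
  proof -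
    have "(\<Sum>i=1..r. d i * u i) = d 1 * u 1 + (\<Sum>i=Suc 1..r. d i * u i)"
      by (rule sum.atLeast_Suc_atMost) (simp add: r')
    also have "Suc 1 = 2" by simp
    also have "d 1 * u 1 = y"
    proof -
      have "\<not> (m = J \<and> 1 = J)" using J2 by auto
      then show ?thesis using hdu[of 1] hV1 r m2 J2 unfolding u_def by auto
    qed
    also have "(\<Sum>i=2..r. d i * u i) = (\<Sum>i=2..r. V i - (if m = J \<and> i = J then V i else 0))"
    proof (rule sum.cong)
      fix i assume i: "i \<in> {2..r}"
      show "d i * u i = V i - (if m = J \<and> i = J then V i else 0)"
      proof (cases "m = J \<and> i = J")
        case True
        then have "u i = 0" unfolding u_def using J2 by auto
        then show ?thesis using True by simp
      next
        case False
        then show ?thesis using hdu[of i] i unfolding u_def by auto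
      qed
    qed simp
    also have "\<dots> = (\<Sum>i=2..r. V i) - (\<Sum>i=2..r. if m = J \<and> i = J then V i else 0)"
      by (simp add: sum_subtractf)
    also have "(\<Sum>i=2..r. if m = J \<and> i = J then V i else 0) = (if m = J then V J else 0)"
    proof (cases "m = J")
      case True
      then have "J \<in> {2..r}" using r J2 by auto
      then show ?thesis using True by (simp add: sum.delta)
    qed simp
    also have "(\<Sum>i=2..r. V i) = (\<Sum>i=1..r'. V (i+1))"
      using r' sum.shift_bounds_cl_Suc_ivl[of V 1 r'] by (simp add: numeral_2_eq_2)
    also have "\<dots> = (\<Sum>i=1..r'. (a i + c i) / b i)"
      by (rule sum.cong) (use hVi r' in auto)
    finally show ?thesis by simp
  qed
  have g2: "(\<Sum>i=1..r'. (a i + c i) / d (i+1)) = (\<Sum>i=1..r'. b i * u (i+1)) + (if m = J then b (J-1) else 0)"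
  proof -
    have "(\<Sum>i=1..r'. (a i + c i) / d (i+1)) = (\<Sum>i=1..r'. b i * u (i+1) + (if m = J \<and> i + 1 = J then b i else 0))"
    proof (rule sum.cong)
      fix i assume i: "i \<in> {1..r'}"
      have bi: "b i \<noteq> 0" using bnz[of i] i r' by auto
      have di: "d (i+1) \<noteq> 0" using dnz[of "i+1"] i r' by auto
      have ac: "a i + c i = b i * V (i+1)" using hVi[of "i+1"] i r' bi by (auto simp: field_simps)
      show "(a i + c i) / d (i+1) = b i * u (i+1) + (if m = J \<and> i + 1 = J then b i else 0)"
      proof (cases "m = J \<and> i + 1 = J")
        case True
        then have "u (i+1) = 0" unfolding u_def using J2 by auto
        moreover have "V (i+1) = d (i+1)" using hdJ True by auto
        ultimately show ?thesis using True ac di by simp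
      next
        case False
        have "d (i+1) * u (i+1) = V (i+1)" using hdu[of "i+1"] False i r' unfolding u_def by auto
        then have "u (i+1) = V (i+1) / d (i+1)" using di by (simp add: field_simps)
        then show ?thesis using False ac by auto
      qed
    qed simp
    also have "\<dots> = (\<Sum>i=1..r'. b i * u (i+1)) + (\<Sum>i=1..r'. if m = J \<and> i + 1 = J then b i else 0)"
      by (simp add: sum.distrib)
    also have "(\<Sum>i=1..r'. if m = J \<and> i + 1 = J then b i else 0) = (if m = J then b (J-1) else 0)"
    proof (cases "m = J")
      case True
      then have "(\<Sum>i=1..r'. if m = J \<and> i + 1 = J then b i else 0) = (\<Sum>i=1..r'. if i = J - 1 then b i else 0)"
        using J2 by (intro sum.cong) auto
      also have "\<dots> = b (J-1)"
      proof -
        have "J - 1 \<in> {1..r'}" using True r r' J2 by auto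
        then show ?thesis by (simp add: sum.delta)
      qed
      finally show ?thesis using True by simp
    qed simp
    finally show ?thesis .
  qed
  have g2b: "(\<Sum>i=1..r'. b i * u (i+1)) = (\<Sum>i=1..min (m-2) (J-1). b i / a (i+1)) + (\<Sum>i=1..min (J-2) (m-1). b i / c (i+1))"
  proof -
    have "(\<Sum>i=1..min (m-2) (J-1). b i / a (i+1)) = (\<Sum>i=1..r'. if i \<le> min (m-2) (J-1) then b i / a (i+1) else 0)"
      by (rule sum_upto_if) (use r r' in auto)
    moreover have "(\<Sum>i=1..min (J-2) (m-1). b i / c (i+1)) = (\<Sum>i=1..r'. if i \<le> min (J-2) (m-1) then b i / c (i+1) else 0)"
      by (rule sum_upto_if) (use r r' in auto)
    moreover have "(\<Sum>i=1..r'. b i * u (i+1)) = (\<Sum>i=1..r'. (if i \<le> min (m-2) (J-1) then b i / a (i+1) else 0) + (if i \<le> min (J-2) (m-1) then b i / c (i+1) else 0))"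
    proof (rule sum.cong)
      fix i assume i: "i \<in> {1..r'}"
      have e1: "(i + 1 \<le> min J (m-1)) = (i \<le> min (m-2) (J-1))" using i m2 J2 by auto
      have e2: "(i + 1 \<le> min m (J-1)) = (i \<le> min (J-2) (m-1))" using i m2 J2 by auto
      show "b i * u (i+1) = (if i \<le> min (m-2) (J-1) then b i / a (i+1) else 0) + (if i \<le> min (J-2) (m-1) then b i / c (i+1) else 0)"
        unfolding u_def e1 e2 by (simp add: distrib_left)
    qed simp
    ultimately show ?thesis by (simp add: sum.distrib)
  qed
  have s1: "(\<Sum>i=1..min (m-1) (J-1). c i / d (i+1)) + (\<Sum>i=1..min (J-1) (m-1). a i / d (i+1)) = (\<Sum>i=1..r'. (a i + c i) / d (i+1))"
    unfolding mr by (simp add: sum.distrib[symmetric] add_divide_distrib add.commute)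
  have s2: "(\<Sum>i=1..min (m-1) (J-1). a i / b i) + (\<Sum>i=1..min (J-1) (m-1). c i / b i) = (\<Sum>i=1..r'. (a i + c i) / b i)"
    unfolding mr by (simp add: sum.distrib[symmetric] add_divide_distrib)
  have vJ: "m = J \<Longrightarrow> V J = d J" using hdJ by simp
  show ?thesis
    using g1 g1b g2 g2b s1 s2 vJ by (auto simp: algebra_simps)
qed


definition pp :: "(nat \<Rightarrow> nat \<Rightarrow> nat \<Rightarrow> complex) \<Rightarrow> nat \<Rightarrow> nat \<Rightarrow> nat \<Rightarrow> complex" where
  "pp \<tau> k i j = \<tau> k i j / \<tau> k (Suc i) j"

definition Phi :: "(nat \<Rightarrow> nat \<Rightarrow> nat \<Rightarrow> complex) \<Rightarrow> nat \<Rightarrow> nat \<Rightarrow> complex" where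
  "Phi \<tau> m J = F_GT J m (pp \<tau> m) + F_GT m J (\<lambda>i l. pp \<tau> l i J) + (if m = J then pp \<tau> m J J else 0)"

lemma sum_ivl_last:
  fixes f :: "nat \<Rightarrow> 'a::comm_monoid_add"
  assumes "N \<ge> 1"
  shows "(\<Sum>j=i..N. f j) = (\<Sum>j=i..N-1. f j) + (if i \<le> N then f N else 0)"
proof -
  obtain N0 where N: "N = Suc N0" using assms by (cases N) auto
  show ?thesis unfolding N by (simp add: sum.cl_ivl_Suc)
qed

lemma sum_if_le_min:
  fixes h :: "nat \<Rightarrow> 'a::comm_monoid_add"
  shows "(\<Sum>i=1..K. if i \<le> N then h i else 0) = (\<Sum>i=1..min K N. h i)"
proof -
  have "(\<Sum>i=1..min K N. h i) = (\<Sum>i=1..K. if i \<le> min K N then h i else 0)"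
    by (rule sum_upto_if) auto
  also have "\<dots> = (\<Sum>i=1..K. if i \<le> N then h i else 0)"
    by (rule sum.cong) auto
  finally show ?thesis by simp
qed

lemma F_GT_Suc:
  assumes "N \<ge> 1"
  shows "F_GT (Suc N) K z = F_GT N K z + (\<Sum>i=1..min K N. z i (Suc N) / z i N)
     + (\<Sum>i=1..min (K-1) N. z i N / z (Suc i) (Suc N)) + (if K = N then z K K else 0)"
proof -
  have s1: "(\<Sum>i=1..K. \<Sum>j=i..Suc N - 1. z i (j+1) / z i j) =
      (\<Sum>i=1..K. \<Sum>j=i..N - 1. z i (j+1) / z i j) + (\<Sum>i=1..min K N. z i (Suc N) / z i N)"
  proof -
    have "(\<Sum>i=1..K. \<Sum>j=i..Suc N - 1. z i (j+1) / z i j) =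
       (\<Sum>i=1..K. (\<Sum>j=i..N - 1. z i (j+1) / z i j) + (if i \<le> N then z i (Suc N) / z i N else 0))"
    proof (rule sum.cong[OF refl])
      fix i show "(\<Sum>j=i..Suc N - 1. z i (j+1) / z i j) = (\<Sum>j=i..N - 1. z i (j+1) / z i j) + (if i \<le> N then z i (Suc N) / z i N else 0)"
        using sum_ivl_last[OF assms, where i=i and f="\<lambda>j. z i (j+1) / z i j"] by simp
    qed
    then show ?thesis using sum_if_le_min[where K=K and N=N and h="\<lambda>i. z i (Suc N) / z i N"] by (simp add: sum.distrib)
  qed
  have s2: "(\<Sum>i=1..K-1. \<Sum>j=i..Suc N - 1. z i j / z (i+1) (j+1)) =
      (\<Sum>i=1..K-1. \<Sum>j=i..N - 1. z i j / z (i+1) (j+1)) + (\<Sum>i=1..min (K-1) N. z i N / z (Suc i) (Suc N))"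
  proof -
    have "(\<Sum>i=1..K-1. \<Sum>j=i..Suc N - 1. z i j / z (i+1) (j+1)) =
       (\<Sum>i=1..K-1. (\<Sum>j=i..N - 1. z i j / z (i+1) (j+1)) + (if i \<le> N then z i N / z (Suc i) (Suc N) else 0))"
    proof (rule sum.cong[OF refl])
      fix i show "(\<Sum>j=i..Suc N - 1. z i j / z (i+1) (j+1)) = (\<Sum>j=i..N - 1. z i j / z (i+1) (j+1)) + (if i \<le> N then z i N / z (Suc i) (Suc N) else 0)"
        using sum_ivl_last[OF assms, where i=i and f="\<lambda>j. z i j / z (i+1) (j+1)"] by simp
    qed
    then show ?thesis using sum_if_le_min[where K="K-1" and N=N and h="\<lambda>i. z i N / z (Suc i) (Suc N)"] by (simp add: sum.distrib)
  qed
  show ?thesis unfolding F_GT_def s1 s2 using assms by auto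
qed

locale tau_sys =
  fixes \<tau> :: "nat \<Rightarrow> nat \<Rightarrow> nat \<Rightarrow> complex" and y :: "nat \<Rightarrow> nat \<Rightarrow> complex" and MM NN :: nat
  assumes K: "\<And>k i j. 1 \<le> k \<Longrightarrow> k \<le> MM \<Longrightarrow> 1 \<le> i \<Longrightarrow> i \<le> k \<Longrightarrow> i < j \<Longrightarrow> j \<le> NN \<Longrightarrow>
      \<tau> k (i+1) j * \<tau> (k-1) i (j-1) = \<tau> (k-1) i j * \<tau> k (i+1) (j-1) + \<tau> (k-1) (i+1) j * \<tau> k i (j-1)"
  and D1: "\<And>k j. 1 \<le> k \<Longrightarrow> k \<le> MM \<Longrightarrow> j \<le> NN \<Longrightarrow> \<tau> k 1 j = (\<Prod>c=1..j. y k c) * \<tau> (k-1) 1 j"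
  and D0: "\<And>j. j \<le> NN \<Longrightarrow> \<tau> 0 1 j = 1"
  and Eempty: "\<And>k j. \<tau> k (Suc j) j = 1"
  and Etop: "\<And>k j. k \<le> MM \<Longrightarrow> k + 1 \<le> j \<Longrightarrow> j \<le> NN \<Longrightarrow> \<tau> k (k+1) j = 1"
  and Ezero: "\<And>k i j. k \<le> MM \<Longrightarrow> k + 2 \<le> i \<Longrightarrow> i \<le> j \<Longrightarrow> j \<le> NN \<Longrightarrow> \<tau> k i j = 0"
  and NZ: "\<And>k i j. k \<le> MM \<Longrightarrow> j \<le> NN \<Longrightarrow> 1 \<le> i \<Longrightarrow> i \<le> k + 1 \<Longrightarrow> i \<le> j + 1 \<Longrightarrow> \<tau> k i j \<noteq> 0"
  and Ynz: "\<And>a c. 1 \<le> a \<Longrightarrow> a \<le> MM \<Longrightarrow> 1 \<le> c \<Longrightarrow> c \<le> NN \<Longrightarrow> y a c \<noteq> 0"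
begin

lemma tau1: "k \<le> MM \<Longrightarrow> j \<le> NN \<Longrightarrow> \<tau> k 1 j = (\<Prod>a=1..k. \<Prod>c=1..j. y a c)"
proof (induction k)
  case 0 then show ?case using D0 by simp
next
  case (Suc k)
  then show ?case using D1[of "Suc k" j] by (simp add: prod.cl_ivl_Suc mult.commute)
qed

lemma local_step:
  assumes m2: "2 \<le> m" and mM: "m \<le> MM" and J2: "2 \<le> J" and JN: "J \<le> NN"
  shows "Phi \<tau> m J - Phi \<tau> (m-1) J - Phi \<tau> m (J-1) + Phi \<tau> (m-1) (J-1) = y m J"
proof -
  define m' where "m' = m - 1"
  define J' where "J' = J - 1"
  have m: "m = Suc m'" and J: "J = Suc J'" and m'1: "m' \<ge> 1" and J'1: "J' \<ge> 1"
    using m2 J2 unfolding m'_def J'_def by auto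
  define a where "a i = pp \<tau> m' i J" for i
  define b where "b i = pp \<tau> m' i J'" for i
  define c where "c i = pp \<tau> m i J'" for i
  define d where "d i = pp \<tau> m i J" for i
  define V where "V i = \<tau> m i J * \<tau> m' i J' / (\<tau> m' i J * \<tau> m i J')" for i
  define r where "r = min m J"
  have km': "m - 1 = m'" using m by simp
  have nz: "\<And>k i j. k \<le> m \<Longrightarrow> j \<le> J \<Longrightarrow> 1 \<le> i \<Longrightarrow> i \<le> k + 1 \<Longrightarrow> i \<le> j + 1 \<Longrightarrow> \<tau> k i j \<noteq> 0"
    using NZ mM JN by auto
  have Kk: "\<And>i j. 1 \<le> i \<Longrightarrow> i \<le> m \<Longrightarrow> i < j \<Longrightarrow> j \<le> J \<Longrightarrow>
      \<tau> m (i+1) j * \<tau> m' i (j-1) = \<tau> m' i j * \<tau> m (i+1) (j-1) + \<tau> m' (i+1) j * \<tau> m i (j-1)"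
    using K[of m] m2 mM JN unfolding m'_def by auto
  have hV1: "V 1 = y m J"
  proof -
    have "\<tau> m 1 J = (\<Prod>c=1..J. y m c) * \<tau> m' 1 J" using D1[of m J] m2 mM JN m'_def by auto
    moreover have "\<tau> m 1 J' = (\<Prod>c=1..J'. y m c) * \<tau> m' 1 J'" using D1[of m J'] m2 mM JN m'_def J by auto
    moreover have "(\<Prod>c=1..J. y m c) = (\<Prod>c=1..J'. y m c) * y m J"
      unfolding J by (simp add: prod.cl_ivl_Suc mult.commute)
    moreover have "(\<Prod>c=1..J'. y m c) \<noteq> 0" using Ynz m2 mM JN J by (auto simp: prod_zero_iff)
    moreover have "\<tau> m' 1 J \<noteq> 0" "\<tau> m' 1 J' \<noteq> 0" using nz[where k=m' and i=1 and j=J] nz[where k=m' and i=1 and j=J'] m J by auto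
    ultimately show ?thesis unfolding V_def by (simp add: field_simps)
  qed
  have hVi: "V i = (a (i-1) + c (i-1)) / b (i-1)" if i: "2 \<le> i" "i \<le> r" for i
  proof -
    obtain i' where i': "i = Suc i'" "i' \<ge> 1" using i by (cases i) auto
    have k: "\<tau> m i J * \<tau> m' i' J' = \<tau> m' i' J * \<tau> m i J' + \<tau> m' i J * \<tau> m i' J'"
      using Kk[of i' J] i i' r_def J by auto
    have n1: "\<tau> m' i J \<noteq> 0" "\<tau> m i J' \<noteq> 0" "\<tau> m' i' J' \<noteq> 0" "\<tau> m' i J' \<noteq> 0"
      using nz[where k=m' and i=i and j=J] nz[where k=m and i=i and j=J'] nz[where k=m' and i=i' and j=J'] nz[where k=m' and i=i and j=J'] i i' r_def m J by auto
    have "(a (i-1) + c (i-1)) / b (i-1) = ((\<tau> m' i' J * \<tau> m i J' + \<tau> m' i J * \<tau> m i' J') / (\<tau> m' i J * \<tau> m i J')) * (\<tau> m' i J' / \<tau> m' i' J')"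
      unfolding a_def b_def c_def pp_def using i' n1 by (simp add: field_simps)
    also have "\<tau> m' i' J * \<tau> m i J' + \<tau> m' i J * \<tau> m i' J' = \<tau> m i J * \<tau> m' i' J'" using k by simp
    finally show ?thesis unfolding V_def using n1 by (simp add: field_simps)
  qed
  have hdu: "d i * ((if i \<le> min J (m-1) then 1 / a i else 0) + (if i \<le> min m (J-1) then 1 / c i else 0)) = V i"
    if i: "1 \<le> i" "i \<le> r" "\<not> (m = J \<and> i = J)" for i
  proof -
    have n1: "\<tau> m' i J \<noteq> 0" "\<tau> m i J' \<noteq> 0" "\<tau> m (Suc i) J \<noteq> 0" "\<tau> m i J \<noteq> 0"
      using nz[where k=m' and i=i and j=J] nz[where k=m and i=i and j=J'] nz[where k=m and i="Suc i" and j=J] nz[where k=m and i=i and j=J] i r_def m J by auto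
    consider (A) "i < J \<and> i < m" | (B) "i = J \<and> i < m" | (C) "i = m \<and> i < J" using i r_def by linarith
    then show ?thesis
    proof cases
      case A
      have k: "\<tau> m (i+1) J * \<tau> m' i J' = \<tau> m' i J * \<tau> m (i+1) J' + \<tau> m' (i+1) J * \<tau> m i J'"
        using Kk[of i J] i A J by auto
      have c1: "i \<le> min J (m-1)" "i \<le> min m (J-1)" using A by auto
      show ?thesis unfolding V_def a_def c_def d_def pp_def using c1 n1 k
        by (simp add: field_simps)
    next
      case B
      have c1: "i \<le> min J (m-1)" "\<not> i \<le> min m (J-1)" using B J by auto
      have e: "\<tau> m (Suc J) J = 1" "\<tau> m' (Suc J) J = 1" "\<tau> m' J J' = 1" "\<tau> m J J' = 1"
        using Eempty J by auto
      show ?thesis unfolding V_def a_def c_def d_def pp_def using c1 n1 e B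
        by (simp add: field_simps)
    next
      case C
      have c1: "\<not> i \<le> min J (m-1)" "i \<le> min m (J-1)" using C m by auto
      have k: "\<tau> m (m+1) J * \<tau> m' m J' = \<tau> m' m J * \<tau> m (m+1) J' + \<tau> m' (m+1) J * \<tau> m m J'"
        using Kk[of m J] C m2 J by auto
      have e: "\<tau> m' m J = 1" "\<tau> m' (m+1) J = 0"
        using Etop[of m' J] Ezero[of m' "m+1" J] C m mM JN by auto
      have n2: "\<tau> m (m+1) J \<noteq> 0" using nz[where k=m and i="m+1" and j=J] C by auto
      show ?thesis unfolding V_def a_def c_def d_def pp_def using c1 n1 n2 e C k
        by (simp add: field_simps)
    qed
  qed
  have hdJ: "d J = V J" if mJ: "m = J"
  proof -
    have e: "\<tau> m (Suc J) J = 1" "\<tau> m' J J = 1" "\<tau> m' J J' = 1" "\<tau> m J J' = 1"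
      using Eempty J Etop[of m' J] mJ m mM JN by auto
    show ?thesis unfolding V_def d_def pp_def using e by simp
  qed
  have dnz: "d i \<noteq> 0" if "1 \<le> i" "i \<le> r" for i
    unfolding d_def pp_def using nz[where k=m and i=i and j=J] nz[where k=m and i="Suc i" and j=J] that r_def by auto
  have bnz: "b i \<noteq> 0" if "1 \<le> i" "i < r" for i
    unfolding b_def pp_def using nz[where k=m' and i=i and j=J'] nz[where k=m' and i="Suc i" and j=J'] that r_def m J by auto
  note alg = local_alg[of m J r V "y m J" a c b d, OF m2 J2 r_def hV1 hVi hdu hdJ dnz bnz]
  have F1: "F_GT J m (pp \<tau> m) = F_GT J' m (pp \<tau> m) + (\<Sum>i=1..min m J'. d i / c i)
      + (\<Sum>i=1..min (m-1) J'. c i / d (Suc i)) + (if m = J' then pp \<tau> m m m else 0)"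
    unfolding J F_GT_Suc[OF J'1] c_def d_def by simp
  have F2: "F_GT J m' (pp \<tau> m') = F_GT J' m' (pp \<tau> m') + (\<Sum>i=1..min m' J'. a i / b i)
      + (\<Sum>i=1..min (m'-1) J'. b i / a (Suc i)) + (if m' = J' then pp \<tau> m' m' m' else 0)"
    unfolding J F_GT_Suc[OF J'1] a_def b_def by simp
  have F3: "F_GT m J (\<lambda>i l. pp \<tau> l i J) = F_GT m' J (\<lambda>i l. pp \<tau> l i J) + (\<Sum>i=1..min J m'. d i / a i)
      + (\<Sum>i=1..min (J-1) m'. a i / d (Suc i)) + (if J = m' then pp \<tau> J J J else 0)"
    unfolding m F_GT_Suc[OF m'1] a_def d_def by simp
  have F4: "F_GT m J' (\<lambda>i l. pp \<tau> l i J') = F_GT m' J' (\<lambda>i l. pp \<tau> l i J') + (\<Sum>i=1..min J' m'. c i / b i)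
      + (\<Sum>i=1..min (J'-1) m'. b i / c (Suc i)) + (if J' = m' then pp \<tau> J' J' J' else 0)"
    unfolding m F_GT_Suc[OF m'1] b_def c_def by simp
  have F1': "F_GT J m (pp \<tau> m) - F_GT J' m (pp \<tau> m) = (\<Sum>i=1..min m J'. d i / c i)
      + (\<Sum>i=1..min (m-1) J'. c i / d (Suc i)) + (if m = J' then pp \<tau> m m m else 0)"
    using F1 by simp
  have F2': "F_GT J m' (pp \<tau> m') - F_GT J' m' (pp \<tau> m') = (\<Sum>i=1..min m' J'. a i / b i)
      + (\<Sum>i=1..min (m'-1) J'. b i / a (Suc i)) + (if m' = J' then pp \<tau> m' m' m' else 0)"
    using F2 by simp
  have F3': "F_GT m J (\<lambda>i l. pp \<tau> l i J) - F_GT m' J (\<lambda>i l. pp \<tau> l i J) = (\<Sum>i=1..min J m'. d i / a i)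
      + (\<Sum>i=1..min (J-1) m'. a i / d (Suc i)) + (if J = m' then pp \<tau> J J J else 0)"
    using F3 by simp
  have F4': "F_GT m J' (\<lambda>i l. pp \<tau> l i J') - F_GT m' J' (\<lambda>i l. pp \<tau> l i J') = (\<Sum>i=1..min J' m'. c i / b i)
      + (\<Sum>i=1..min (J'-1) m'. b i / c (Suc i)) + (if J' = m' then pp \<tau> J' J' J' else 0)"
    using F4 by simp
  have ifs: "(if m = J' then pp \<tau> m m m else 0) - (if m' = J' then pp \<tau> m' m' m' else 0)
     + (if J = m' then pp \<tau> J J J else 0) - (if J' = m' then pp \<tau> J' J' J' else 0)
     + (if m = J then pp \<tau> m J J else 0) - (if m' = J then pp \<tau> m' J J else 0)
     - (if m = J' then pp \<tau> m J' J' else 0) + (if m' = J' then pp \<tau> m' J' J' else 0)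
     = (if m = J then d J - b (J-1) else 0)"
  proof -
    consider "m = J" | "m = J'" | "m' = J" | "m \<noteq> J \<and> m \<noteq> J' \<and> m' \<noteq> J" by blast
    then show ?thesis
    proof cases
      case 1
      then have "m' = J'" using m J by simp
      then show ?thesis using 1 m J unfolding d_def b_def by simp
    next
      case 2 then show ?thesis using m J by auto
    next
      case 3 then show ?thesis using m J by auto
    next
      case 4 then have "m' \<noteq> J'" using m J by auto
      then show ?thesis using 4 m J by auto
    qed
  qed
  have "Phi \<tau> m J - Phi \<tau> m' J - Phi \<tau> m J' + Phi \<tau> m' J' =
       (F_GT J m (pp \<tau> m) - F_GT J' m (pp \<tau> m)) - (F_GT J m' (pp \<tau> m') - F_GT J' m' (pp \<tau> m'))
     + (F_GT m J (\<lambda>i l. pp \<tau> l i J) - F_GT m' J (\<lambda>i l. pp \<tau> l i J))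
     - (F_GT m J' (\<lambda>i l. pp \<tau> l i J') - F_GT m' J' (\<lambda>i l. pp \<tau> l i J'))
     + (if m = J then pp \<tau> m J J else 0) - (if m' = J then pp \<tau> m' J J else 0)
     - (if m = J' then pp \<tau> m J' J' else 0) + (if m' = J' then pp \<tau> m' J' J' else 0)"
    unfolding Phi_def by (simp add: algebra_simps)
  also have "\<dots> = (\<Sum>i=1..min m J'. d i / c i) + (\<Sum>i=1..min (m-1) J'. c i / d (Suc i))
     - (\<Sum>i=1..min m' J'. a i / b i) - (\<Sum>i=1..min (m'-1) J'. b i / a (Suc i))
     + (\<Sum>i=1..min J m'. d i / a i) + (\<Sum>i=1..min (J-1) m'. a i / d (Suc i))
     - (\<Sum>i=1..min J' m'. c i / b i) - (\<Sum>i=1..min (J'-1) m'. b i / c (Suc i))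
     + ((if m = J' then pp \<tau> m m m else 0) - (if m' = J' then pp \<tau> m' m' m' else 0)
     + (if J = m' then pp \<tau> J J J else 0) - (if J' = m' then pp \<tau> J' J' J' else 0)
     + (if m = J then pp \<tau> m J J else 0) - (if m' = J then pp \<tau> m' J J else 0)
     - (if m = J' then pp \<tau> m J' J' else 0) + (if m' = J' then pp \<tau> m' J' J' else 0))"
    unfolding F1' F2' F3' F4' by (simp only: algebra_simps)
  also have "\<dots> = (\<Sum>i=1..min m J'. d i / c i) + (\<Sum>i=1..min (m-1) J'. c i / d (Suc i))
     - (\<Sum>i=1..min m' J'. a i / b i) - (\<Sum>i=1..min (m'-1) J'. b i / a (Suc i))
     + (\<Sum>i=1..min J m'. d i / a i) + (\<Sum>i=1..min (J-1) m'. a i / d (Suc i))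
     - (\<Sum>i=1..min J' m'. c i / b i) - (\<Sum>i=1..min (J'-1) m'. b i / c (Suc i))
     + (if m = J then d J - b (J-1) else 0)"
    unfolding ifs ..
  also have "\<dots> = y m J"
  proof -
    have e: "m - 2 = m' - 1" "J - 2 = J' - 1" "m - 1 = m'" "J - 1 = J'" using m J by auto
    show ?thesis using alg unfolding e by simp
  qed
  finally show ?thesis unfolding m'_def J'_def .
qed


lemma pp11: "1 \<le> j \<Longrightarrow> j \<le> NN \<Longrightarrow> 1 \<le> MM \<Longrightarrow> pp \<tau> 1 1 j = (\<Prod>c=1..j. y 1 c)"
proof -
  assume j: "1 \<le> j" "j \<le> NN" "1 \<le> MM"
  have "\<tau> 1 (Suc 1) j = 1"
  proof (cases "j = 1")
    case True then show ?thesis using Eempty[of 1 1] by simp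
  next
    case False then show ?thesis using Etop[of 1 j] j by simp
  qed
  then show ?thesis unfolding pp_def using tau1[of 1 j] j by simp
qed

lemma ppl1: "l \<le> MM \<Longrightarrow> 1 \<le> NN \<Longrightarrow> pp \<tau> l 1 1 = (\<Prod>a=1..l. y a 1)"
  unfolding pp_def using tau1[of l 1] Eempty[of l 1] by simp

lemma base_m1:
  assumes "1 \<le> MM" "1 \<le> J" "J \<le> NN"
  shows "Phi \<tau> 1 J = (\<Sum>c=1..J. y 1 c)"
proof -
  have r: "pp \<tau> 1 1 (j+1) / pp \<tau> 1 1 j = y 1 (j+1)" if "1 \<le> j" "j \<le> J - 1" for j
  proof -
    have "(\<Prod>c=1..j. y 1 c) \<noteq> 0" using Ynz assms that by (auto simp: prod_zero_iff)
    then show ?thesis using pp11[of j] pp11[of "j+1"] assms that by (simp add: prod.cl_ivl_Suc)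
  qed
  have F1: "F_GT J 1 (pp \<tau> 1) = (\<Sum>j=1..J-1. y 1 (j+1)) + (if 1 < J then y 1 1 else 0)"
  proof -
    have "F_GT J 1 (pp \<tau> 1) = (\<Sum>j=1..J-1. pp \<tau> 1 1 (j+1) / pp \<tau> 1 1 j) + (if 1 < J then pp \<tau> 1 1 1 else 0)"
      unfolding F_GT_def by simp
    also have "(\<Sum>j=1..J-1. pp \<tau> 1 1 (j+1) / pp \<tau> 1 1 j) = (\<Sum>j=1..J-1. y 1 (j+1))"
      by (rule sum.cong) (use r in auto)
    finally show ?thesis using pp11[of 1] assms by simp
  qed
  have F2: "F_GT 1 J (\<lambda>i l. pp \<tau> l i J) = 0" unfolding F_GT_def using assms by simp
  have "(\<Sum>c=1..J. y 1 c) = y 1 1 + (\<Sum>c=Suc 1..J. y 1 c)"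
    by (rule sum.atLeast_Suc_atMost) (use assms in simp)
  also have "(\<Sum>c=Suc 1..J. y 1 c) = (\<Sum>j=1..J-1. y 1 (j+1))"
  proof -
    have "J = Suc (J-1)" using assms by simp
    then have "(\<Sum>c=Suc 1..J. y 1 c) = (\<Sum>c=Suc 1..Suc (J-1). y 1 c)" by simp
    also have "\<dots> = (\<Sum>j=1..J-1. y 1 (Suc j))" by (rule sum.shift_bounds_cl_Suc_ivl)
    finally show ?thesis by simp
  qed
  finally show ?thesis unfolding Phi_def F1 F2 using pp11[of 1] assms by auto
qed

lemma base_J1:
  assumes "1 \<le> m" "m \<le> MM" "1 \<le> NN"
  shows "Phi \<tau> m 1 = (\<Sum>a=1..m. y a 1)"
proof -
  have r: "pp \<tau> (l+1) 1 1 / pp \<tau> l 1 1 = y (l+1) 1" if "1 \<le> l" "l \<le> m - 1" for l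
  proof -
    have "(\<Prod>a=1..l. y a 1) \<noteq> 0" using Ynz assms that by (auto simp: prod_zero_iff)
    then show ?thesis using ppl1[of l] ppl1[of "l+1"] assms that by (simp add: prod.cl_ivl_Suc)
  qed
  have F1: "F_GT m 1 (\<lambda>i l. pp \<tau> l i 1) = (\<Sum>l=1..m-1. y (l+1) 1) + (if 1 < m then y 1 1 else 0)"
  proof -
    have "F_GT m 1 (\<lambda>i l. pp \<tau> l i 1) = (\<Sum>l=1..m-1. pp \<tau> (l+1) 1 1 / pp \<tau> l 1 1) + (if 1 < m then pp \<tau> 1 1 1 else 0)"
      unfolding F_GT_def by simp
    also have "(\<Sum>l=1..m-1. pp \<tau> (l+1) 1 1 / pp \<tau> l 1 1) = (\<Sum>l=1..m-1. y (l+1) 1)"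
      by (rule sum.cong) (use r in auto)
    finally show ?thesis using ppl1[of 1] assms by simp
  qed
  have F2: "F_GT 1 m (pp \<tau> m) = 0" unfolding F_GT_def using assms by simp
  have "(\<Sum>a=1..m. y a 1) = y 1 1 + (\<Sum>a=Suc 1..m. y a 1)"
    by (rule sum.atLeast_Suc_atMost) (use assms in simp)
  also have "(\<Sum>a=Suc 1..m. y a 1) = (\<Sum>l=1..m-1. y (l+1) 1)"
  proof -
    have "m = Suc (m-1)" using assms by simp
    then have "(\<Sum>a=Suc 1..m. y a 1) = (\<Sum>a=Suc 1..Suc (m-1). y a 1)" by simp
    also have "\<dots> = (\<Sum>l=1..m-1. y (Suc l) 1)" by (rule sum.shift_bounds_cl_Suc_ivl)
    finally show ?thesis by simp
  qed
  finally show ?thesis unfolding Phi_def F1 F2 using ppl1[of 1] assms by auto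
qed

lemma sum_rect_step:
  fixes f :: "nat \<Rightarrow> nat \<Rightarrow> complex"
  assumes "1 \<le> m" "1 \<le> J"
  shows "(\<Sum>a=1..m. \<Sum>c=1..J. f a c) = (\<Sum>a=1..m-1. \<Sum>c=1..J. f a c) + (\<Sum>a=1..m. \<Sum>c=1..J-1. f a c)
     - (\<Sum>a=1..m-1. \<Sum>c=1..J-1. f a c) + f m J"
proof -
  obtain m' J' where m: "m = Suc m'" and J: "J = Suc J'" using assms by (cases m; cases J) auto
  have "(\<Sum>a=1..Suc m'. \<Sum>c=1..Suc J'. f a c) = (\<Sum>a=1..Suc m'. (\<Sum>c=1..J'. f a c) + f a (Suc J'))"
    by (rule sum.cong) (auto simp: sum.cl_ivl_Suc)
  also have "\<dots> = (\<Sum>a=1..Suc m'. \<Sum>c=1..J'. f a c) + (\<Sum>a=1..Suc m'. f a (Suc J'))" by (simp add: sum.distrib)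
  also have "(\<Sum>a=1..Suc m'. f a (Suc J')) = (\<Sum>a=1..m'. f a (Suc J')) + f (Suc m') (Suc J')"
    by (simp add: sum.cl_ivl_Suc)
  also have "(\<Sum>a=1..m'. f a (Suc J')) = (\<Sum>a=1..m'. \<Sum>c=1..Suc J'. f a c) - (\<Sum>a=1..m'. \<Sum>c=1..J'. f a c)"
    by (simp add: sum.cl_ivl_Suc sum.distrib)
  finally show ?thesis unfolding m J by simp
qed

theorem main_identity:
  assumes "1 \<le> m" "m \<le> MM" "1 \<le> J" "J \<le> NN"
  shows "(\<Sum>a=1..m. \<Sum>c=1..J. y a c) = Phi \<tau> m J"
  using assms
proof (induction "m + J" arbitrary: m J rule: less_induct)
  case less
  show ?case
  proof (cases "m = 1")
    case True then show ?thesis using base_m1[of J] less.prems by simp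
  next
    case m1: False
    show ?thesis
    proof (cases "J = 1")
      case True then show ?thesis using base_J1[of m] less.prems by simp
    next
      case J1: False
      have m2: "2 \<le> m" and J2: "2 \<le> J" using m1 J1 less.prems by auto
      have i1: "(\<Sum>a=1..m-1. \<Sum>c=1..J. y a c) = Phi \<tau> (m-1) J" using less.hyps[of "m-1" J] less.prems m2 by auto
      have i2: "(\<Sum>a=1..m. \<Sum>c=1..J-1. y a c) = Phi \<tau> m (J-1)" using less.hyps[of m "J-1"] less.prems J2 by auto
      have i3: "(\<Sum>a=1..m-1. \<Sum>c=1..J-1. y a c) = Phi \<tau> (m-1) (J-1)" using less.hyps[of "m-1" "J-1"] less.prems m2 J2 by auto
      have s: "(\<Sum>a=1..m. \<Sum>c=1..J. y a c) = (\<Sum>a=1..m-1. \<Sum>c=1..J. y a c) + (\<Sum>a=1..m. \<Sum>c=1..J-1. y a c)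
     - (\<Sum>a=1..m-1. \<Sum>c=1..J-1. y a c) + y m J"
        using sum_rect_step[where m=m and J=J and f=y] less.prems by simp
      have l: "Phi \<tau> m J - Phi \<tau> (m-1) J - Phi \<tau> m (J-1) + Phi \<tau> (m-1) (J-1) = y m J"
        using local_step[OF m2 _ J2] less.prems by simp
      show ?thesis unfolding s i1 i2 i3 using l by (simp add: algebra_simps)
    qed
  qed
qed

end


lemma prod_list_map_upt: "prod_list (map f [0..<n]) = (\<Prod>i<n. f i)"
  by (induction n) (auto simp: lessThan_Suc mult.commute)

lemma Wmat_carrier[simp]: "Wmat n y \<in> carrier_mat n n"
  unfolding Wmat_def by simp

lemma Wmat_dim[simp]: "dim_row (Wmat n y) = n" "dim_col (Wmat n y) = n"
  unfolding Wmat_def by simp_all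

lemma Mprod_carrier[simp]: "Mprod n x k \<in> carrier_mat n n"
  by (induction k) auto

lemma Mprod_dim[simp]: "dim_row (Mprod n x k) = n" "dim_col (Mprod n x k) = n"
  using carrier_matD[OF Mprod_carrier[of n x k]] by auto

lemma mult_Wmat_index:
  assumes A: "A \<in> carrier_mat n n" and i: "i < n" and j: "j < n"
  shows "(A * Wmat n y) $$ (i,j) = y (j+1) * A $$ (i,j) + (if j + 1 < n then A $$ (i, j+1) else 0)"
proof -
  have "(A * Wmat n y) $$ (i,j) = (\<Sum>l<n. A $$ (i,l) * Wmat n y $$ (l,j))"
    using A i j by (simp add: index_mult_mat(1) carrier_matD scalar_prod_def lessThan_atLeast0)
  also have "\<dots> = (\<Sum>l<n. (if l = j then y (j+1) * A $$ (i,j) else 0) + (if l = j + 1 then A $$ (i,j+1) else 0))"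
    by (rule sum.cong) (use j in \<open>auto simp: Wmat_def\<close>)
  also have "\<dots> = y (j+1) * A $$ (i,j) + (if j + 1 < n then A $$ (i, j+1) else 0)"
    using j by (simp add: sum.distrib)
  finally show ?thesis .
qed

lemma Mprod_Suc_index:
  assumes "i < n" "j < n"
  shows "Mprod n x (Suc k) $$ (i,j) = x (Suc k) (j+1) * Mprod n x k $$ (i,j) + (if j + 1 < n then Mprod n x k $$ (i, j+1) else 0)"
  using mult_Wmat_index[OF Mprod_carrier assms] by simp

lemma Mprod_zero: "r < n \<Longrightarrow> c < n \<Longrightarrow> r < c \<or> r > c + k \<Longrightarrow> Mprod n x k $$ (r,c) = 0"
proof (induction k arbitrary: r c)
  case 0 then show ?case by auto
next
  case (Suc k)
  have "Mprod n x k $$ (r,c) = 0" using Suc by auto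
  moreover have "c + 1 < n \<Longrightarrow> Mprod n x k $$ (r,c+1) = 0" using Suc by auto
  ultimately show ?case using Mprod_Suc_index[OF Suc(2,3)] by simp
qed

lemma Mprod_one: "c + k < n \<Longrightarrow> Mprod n x k $$ (c+k,c) = 1"
proof (induction k arbitrary: c)
  case 0 then show ?case by auto
next
  case (Suc k)
  have z: "Mprod n x k $$ (c + Suc k, c) = 0" by (rule Mprod_zero) (use Suc in auto)
  have o: "Mprod n x k $$ (c + Suc k, c + 1) = 1" using Suc.IH[of "c+1"] Suc.prems by (simp add: add.commute add.left_commute)
  show ?case using Mprod_Suc_index[of "c + Suc k" n c x k] Suc.prems z o by simp
qed

lemma Mprod_diag: "c < n \<Longrightarrow> Mprod n x k $$ (c,c) = (\<Prod>a=1..k. x a (c+1))"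
proof (induction k)
  case 0 then show ?case by auto
next
  case (Suc k)
  have z: "c + 1 < n \<Longrightarrow> Mprod n x k $$ (c, c+1) = 0" by (rule Mprod_zero) (use Suc in auto)
  show ?case using Mprod_Suc_index[of c n c x k] Suc z by (simp add: prod.cl_ivl_Suc mult.commute)
qed

lemma minor_empty: "minor_int (Suc j) j A = 1"
  unfolding minor_int_def by simp

lemma minor_1:
  assumes "j \<le> n"
  shows "minor_int 1 j (Mprod n x k) = (\<Prod>a=1..k. \<Prod>c=1..j. x a c)"
proof -
  let ?B = "mat j j (\<lambda>(r, c). Mprod n x k $$ (r, c))"
  have lt: "?B $$ (r,c) = 0" if "r < c" "c < j" for r c
  proof -
    have "Mprod n x k $$ (r, c) = 0" by (rule Mprod_zero) (use assms that in linarith)+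
    then show ?thesis using that by simp
  qed
  have "minor_int 1 j (Mprod n x k) = det ?B" unfolding minor_int_def by simp
  also have "\<dots> = prod_list (diag_mat ?B)"
    by (rule det_lower_triangular[of j]) (use lt in blast, rule mat_carrier)
  also have "\<dots> = (\<Prod>c<j. ?B $$ (c, c))"
    unfolding diag_mat_def prod_list_map_upt by simp
  also have "\<dots> = (\<Prod>c<j. \<Prod>a=1..k. x a (c+1))"
    by (rule prod.cong) (use assms in \<open>auto simp: Mprod_diag\<close>)
  also have "\<dots> = (\<Prod>c=1..j. \<Prod>a=1..k. x a c)"
  proof -
    have "(\<Prod>c<j. \<Prod>a=1..k. x a (c+1)) = (\<Prod>c\<in>Suc ` {..<j}. \<Prod>a=1..k. x a c)"
      by (subst prod.reindex) auto
    also have "Suc ` {..<j} = {1..j}" by (rule lessThan_atLeast0[THEN ssubst], rule image_Suc_atLeastLessThan[THEN trans]) auto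
    finally show ?thesis .
  qed
  also have "\<dots> = (\<Prod>a=1..k. \<Prod>c=1..j. x a c)" by (rule prod.swap)
  finally show ?thesis .
qed

lemma Mprod_one1: "c + k < n \<Longrightarrow> Mprod n x k $$ (k + c, c) = 1"
  using Mprod_one[of c k n x] by (simp add: add.commute)

lemma minor_top:
  assumes "k + 1 \<le> j" "j \<le> n"
  shows "minor_int (k+1) j (Mprod n x k) = 1"
proof -
  let ?s = "j - k"
  let ?B = "mat ?s ?s (\<lambda>(r, c). Mprod n x k $$ (k + r, c))"
  have ut: "upper_triangular ?B"
    unfolding upper_triangular_def
  proof (intro allI impI)
    fix r c assume rc: "r < dim_row ?B" "c < r"
    then have r: "r < ?s" by simp
    have "Mprod n x k $$ (k + r, c) = 0"
      by (rule Mprod_zero) (use assms r rc in linarith)+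
    then show "?B $$ (r, c) = 0" using r rc by simp
  qed
  have "minor_int (k+1) j (Mprod n x k) = det ?B" unfolding minor_int_def using assms by simp
  also have "\<dots> = prod_list (diag_mat ?B)"
    by (rule det_upper_triangular[OF ut]) (rule mat_carrier)
  also have "\<dots> = (\<Prod>r<?s. ?B $$ (r, r))"
    unfolding diag_mat_def prod_list_map_upt by simp
  also have "\<dots> = 1"
  proof (rule prod.neutral, intro ballI)
    fix r assume "r \<in> {..<?s}"
    then have r: "r < ?s" by simp
    then have "Mprod n x k $$ (k + r, r) = 1" using Mprod_one1[of r k n x] assms by simp
    then show "?B $$ (r, r) = 1" using r by simp
  qed
  finally show ?thesis .
qed

lemma minor_zero:
  assumes "k + 2 \<le> i" "i \<le> j" "j \<le> n"
  shows "minor_int i j (Mprod n x k) = 0"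
proof -
  let ?s = "j + 1 - i"
  let ?B = "mat ?s ?s (\<lambda>(r, c). Mprod n x k $$ (i - 1 + r, c))"
  have ut: "upper_triangular ?B"
    unfolding upper_triangular_def
  proof (intro allI impI)
    fix r c assume rc: "r < dim_row ?B" "c < r"
    then have r: "r < ?s" by simp
    have "Mprod n x k $$ (i - 1 + r, c) = 0"
      by (rule Mprod_zero) (use assms r rc in linarith)+
    then show "?B $$ (r, c) = 0" using r rc by simp
  qed
  have "minor_int i j (Mprod n x k) = det ?B" unfolding minor_int_def by simp
  also have "\<dots> = prod_list (diag_mat ?B)"
    by (rule det_upper_triangular[OF ut]) (rule mat_carrier)
  also have "\<dots> = (\<Prod>r<?s. ?B $$ (r, r))"
    unfolding diag_mat_def prod_list_map_upt by simp
  also have "\<dots> = 0"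
  proof -
    have s0: "0 < ?s" using assms by simp
    have "Mprod n x k $$ (i - 1, 0) = 0" by (rule Mprod_zero) (use assms in linarith)+
    then have "?B $$ (0, 0) = 0" using s0 by simp
    then show ?thesis using s0 by (intro prod_zero) (auto intro!: bexI[of _ 0])
  qed
  finally show ?thesis .
qed


lemma det_col_single:
  assumes A: "A \<in> carrier_mat N N" and j: "j < N" and p: "p < N"
    and z: "\<And>r. r < N \<Longrightarrow> r \<noteq> p \<Longrightarrow> A $$ (r, j) = 0"
  shows "det A = A $$ (p, j) * cofactor A p j"
proof -
  have "det A = (\<Sum>i<N. A $$ (i,j) * cofactor A i j)" by (rule laplace_expansion_column[OF A j])
  also have "\<dots> = (\<Sum>i<N. if i = p then A $$ (p,j) * cofactor A p j else 0)"
    by (rule sum.cong) (use z in auto)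
  also have "\<dots> = A $$ (p, j) * cofactor A p j" using p by simp
  finally show ?thesis .
qed

lemma det_row_two:
  assumes A: "A \<in> carrier_mat N N" and i: "i < N" and p: "p < N" and q: "q < N" and pq: "p \<noteq> q"
    and z: "\<And>c. c < N \<Longrightarrow> c \<noteq> p \<Longrightarrow> c \<noteq> q \<Longrightarrow> A $$ (i, c) = 0"
  shows "det A = A $$ (i, p) * cofactor A i p + A $$ (i, q) * cofactor A i q"
proof -
  have "det A = (\<Sum>c<N. A $$ (i,c) * cofactor A i c)" by (rule laplace_expansion_row[OF A i])
  also have "\<dots> = (\<Sum>c<N. (if c = p then A $$ (i,p) * cofactor A i p else 0) + (if c = q then A $$ (i,q) * cofactor A i q else 0))"
    by (rule sum.cong) (use z pq in auto)
  also have "\<dots> = A $$ (i, p) * cofactor A i p + A $$ (i, q) * cofactor A i q" using p q by (simp add: sum.distrib)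
  finally show ?thesis .
qed

lemma det_upper_tri_prod:
  assumes "A \<in> carrier_mat N N" and "\<And>r c. c < r \<Longrightarrow> r < N \<Longrightarrow> A $$ (r, c) = 0"
  shows "det A = (\<Prod>r<N. A $$ (r, r))"
proof -
  have "upper_triangular A" using assms unfolding upper_triangular_def by auto
  then have "det A = prod_list (diag_mat A)" by (rule det_upper_triangular[OF _ assms(1)])
  also have "prod_list (diag_mat A) = prod_list (map (\<lambda>i. A $$ (i,i)) [0..<N])"
    using assms(1) unfolding diag_mat_def by simp
  also have "\<dots> = (\<Prod>r<N. A $$ (r, r))" by (induction N) (auto simp: lessThan_Suc mult.commute)
  finally show ?thesis .
qed

lemma DJ:
  fixes G :: "'a :: field mat"
  assumes G: "G \<in> carrier_mat (Suc (Suc L)) (Suc (Suc L))" and dG: "det G \<noteq> 0"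
  shows "det (mat_delete G 0 L) * det (mat_delete G (Suc L) (Suc L))
       - det (mat_delete G 0 (Suc L)) * det (mat_delete G (Suc L) L)
       = det G * det (mat L L (\<lambda>(r, c). G $$ (Suc r, c)))"
proof -
  define N where "N = Suc (Suc L)"
  have GN: "G \<in> carrier_mat N N" using G N_def by simp
  define C where "C = adj_mat G"
  have C: "C \<in> carrier_mat N N" "G * C = det G \<cdot>\<^sub>m 1\<^sub>m N" using adj_mat[OF GN] C_def by auto
  define K where "K = mat N N (\<lambda>(r, c). if c = L then C $$ (r, 0) else if c = Suc L then C $$ (r, Suc L) else (if r = c then 1 else 0))"
  have K: "K \<in> carrier_mat N N" unfolding K_def by simp
  define D where "D p u = det (mat_delete G p u)" for p u
  have Cidx: "C $$ (r, c) = (-1) ^ (c + r) * D c r" if "r < N" "c < N" for r c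
    using that GN unfolding C_def adj_mat_def cofactor_def D_def by simp
  have GCi: "(G * C) $$ (r, c) = (if r = c then det G else 0)" if "r < N" "c < N" for r c
    using that C(2) by simp
  have GKe: "G * K = mat N N (\<lambda>(r, c). if c = L then (if r = 0 then det G else 0)
       else if c = Suc L then (if r = Suc L then det G else 0) else G $$ (r, c))"
  proof (rule eq_matI)
    fix r c assume rc: "r < dim_row (mat N N (\<lambda>(r, c). if c = L then (if r = 0 then det G else 0)
       else if c = Suc L then (if r = Suc L then det G else 0) else G $$ (r, c)))"
      "c < dim_col (mat N N (\<lambda>(r, c). if c = L then (if r = 0 then det G else 0)
       else if c = Suc L then (if r = Suc L then det G else 0) else G $$ (r, c)))"
    then have r: "r < N" and c: "c < N" by auto
    have "(G * K) $$ (r, c) = (\<Sum>l<N. G $$ (r, l) * K $$ (l, c))"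
      using r c GN K by (simp add: index_mult_mat(1) carrier_matD scalar_prod_def lessThan_atLeast0)
    also have "\<dots> = (if c = L then (if r = 0 then det G else 0)
       else if c = Suc L then (if r = Suc L then det G else 0) else G $$ (r, c))"
    proof (cases "c = L \<or> c = Suc L")
      case True
      define c' where "c' = (if c = L then 0 else Suc L)"
      have c'N: "c' < N" unfolding c'_def N_def by simp
      have "(\<Sum>l<N. G $$ (r, l) * K $$ (l, c)) = (\<Sum>l<N. G $$ (r, l) * C $$ (l, c'))"
        by (rule sum.cong) (use True in \<open>auto simp: K_def c'_def N_def\<close>)
      also have "\<dots> = (G * C) $$ (r, c')"
        using r c'N GN C(1) by (simp add: index_mult_mat(1) carrier_matD scalar_prod_def lessThan_atLeast0)
      also have "\<dots> = (if r = c' then det G else 0)" using GCi r c'N by simp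
      finally show ?thesis using True unfolding c'_def by auto
    next
      case False
      have "(\<Sum>l<N. G $$ (r, l) * K $$ (l, c)) = (\<Sum>l<N. if l = c then G $$ (r, c) else 0)"
        by (rule sum.cong) (use False c in \<open>auto simp: K_def\<close>)
      also have "\<dots> = G $$ (r, c)" using c by simp
      finally show ?thesis using False by auto
    qed
    finally show "(G * K) $$ (r, c) = mat N N (\<lambda>(r, c). if c = L then (if r = 0 then det G else 0)
       else if c = Suc L then (if r = Suc L then det G else 0) else G $$ (r, c)) $$ (r, c)"
      using r c by simp
  qed (use GN K in auto)
  define GK where "GK = G * K"
  have GKc: "GK \<in> carrier_mat N N" unfolding GK_def using GN K by simp
  define H where "H = mat (Suc L) (Suc L) (\<lambda>(r, c). if c = L then (if r = 0 then det G else 0) else G $$ (r, c))"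
  have delGK: "mat_delete GK (Suc L) (Suc L) = H"
    unfolding GK_def GKe H_def mat_delete_def N_def by (rule eq_matI) auto
  have detGK: "det GK = det G * det H"
  proof -
    have "det GK = GK $$ (Suc L, Suc L) * cofactor GK (Suc L) (Suc L)"
      by (rule det_col_single[OF GKc]) (auto simp: N_def GK_def GKe)
    then show ?thesis unfolding cofactor_def delGK by (simp add: GK_def GKe N_def)
  qed
  have Hc: "H \<in> carrier_mat (Suc L) (Suc L)" unfolding H_def by simp
  have delH: "mat_delete H 0 L = mat L L (\<lambda>(r, c). G $$ (Suc r, c))"
    unfolding H_def mat_delete_def by (rule eq_matI) auto
  have detH: "det H = det G * ((-1) ^ L * det (mat L L (\<lambda>(r, c). G $$ (Suc r, c))))"
  proof -
    have "det H = H $$ (0, L) * cofactor H 0 L"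
      by (rule det_col_single[OF Hc]) (auto simp: H_def)
    then show ?thesis unfolding cofactor_def delH by (simp add: H_def)
  qed
  have K1: "mat_delete K (Suc L) L \<in> carrier_mat (Suc L) (Suc L)" using mat_delete_carrier[OF K] N_def by simp
  have dK1: "det (mat_delete K (Suc L) L) = C $$ (L, Suc L)"
  proof -
    have "det (mat_delete K (Suc L) L) = (\<Prod>r<Suc L. mat_delete K (Suc L) L $$ (r, r))"
      by (rule det_upper_tri_prod[OF K1]) (auto simp: mat_delete_def K_def N_def)
    also have "\<dots> = (\<Prod>r<L. mat_delete K (Suc L) L $$ (r, r)) * mat_delete K (Suc L) L $$ (L, L)"
      by (simp add: lessThan_Suc mult.commute)
    also have "(\<Prod>r<L. mat_delete K (Suc L) L $$ (r, r)) = 1"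
      by (rule prod.neutral) (auto simp: mat_delete_def K_def N_def)
    finally show ?thesis by (simp add: mat_delete_def K_def N_def)
  qed
  have K2: "mat_delete K (Suc L) (Suc L) \<in> carrier_mat (Suc L) (Suc L)" using mat_delete_carrier[OF K] N_def by simp
  have dK2: "det (mat_delete K (Suc L) (Suc L)) = C $$ (L, 0)"
  proof -
    have "det (mat_delete K (Suc L) (Suc L)) = (\<Prod>r<Suc L. mat_delete K (Suc L) (Suc L) $$ (r, r))"
      by (rule det_upper_tri_prod[OF K2]) (auto simp: mat_delete_def K_def N_def)
    also have "\<dots> = (\<Prod>r<L. mat_delete K (Suc L) (Suc L) $$ (r, r)) * mat_delete K (Suc L) (Suc L) $$ (L, L)"
      by (simp add: lessThan_Suc mult.commute)
    also have "(\<Prod>r<L. mat_delete K (Suc L) (Suc L) $$ (r, r)) = 1"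
      by (rule prod.neutral) (auto simp: mat_delete_def K_def N_def)
    finally show ?thesis by (simp add: mat_delete_def K_def N_def)
  qed
  have detK: "det K = C $$ (Suc L, 0) * (- C $$ (L, Suc L)) + C $$ (Suc L, Suc L) * C $$ (L, 0)"
  proof -
    have "det K = K $$ (Suc L, L) * cofactor K (Suc L) L + K $$ (Suc L, Suc L) * cofactor K (Suc L) (Suc L)"
      by (rule det_row_two[OF K]) (auto simp: N_def K_def)
    then show ?thesis unfolding cofactor_def dK1 dK2 by (simp add: K_def N_def)
  qed
  have "det G * det K = det GK" unfolding GK_def by (rule det_mult[OF GN K, symmetric])
  then have eq: "det K = det G * ((-1) ^ L * det (mat L L (\<lambda>(r, c). G $$ (Suc r, c))))"
    using dG detGK detH by (simp add: field_simps power2_eq_square)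
  have c1: "C $$ (Suc L, 0) = (-1) ^ (Suc L) * D 0 (Suc L)" using Cidx[of "Suc L" 0] N_def by simp
  have c2: "C $$ (L, Suc L) = - D (Suc L) L"
  proof -
    have "C $$ (L, Suc L) = (-1) ^ (Suc L + L) * D (Suc L) L" using Cidx[of L "Suc L"] N_def by simp
    also have "(-1::'a) ^ (Suc L + L) = -1" by (simp add: power_add[symmetric] flip: mult_2)
    finally show ?thesis by simp
  qed
  have c3: "C $$ (Suc L, Suc L) = D (Suc L) (Suc L)" using Cidx[of "Suc L" "Suc L"] N_def by simp
  have c4: "C $$ (L, 0) = (-1) ^ L * D 0 L" using Cidx[of L 0] N_def by simp
  have "det K = (-1) ^ L * (D 0 L * D (Suc L) (Suc L) - D 0 (Suc L) * D (Suc L) L)"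
    unfolding detK c1 c2 c3 c4 by (simp add: algebra_simps)
  then have "(-1) ^ L * (D 0 L * D (Suc L) (Suc L) - D 0 (Suc L) * D (Suc L) L) = (-1) ^ L * (det G * det (mat L L (\<lambda>(r, c). G $$ (Suc r, c))))"
    using eq by (simp add: algebra_simps)
  then show ?thesis unfolding D_def by simp
qed


definition vv :: "(nat \<Rightarrow> complex) \<Rightarrow> nat \<Rightarrow> complex" where
  "vv y b = (-1) ^ b * (\<Prod>c<b. y (c+1))"

lemma det_row_single:
  assumes A: "A \<in> carrier_mat N N" and i: "i < N" and p: "p < N"
    and z: "\<And>c. c < N \<Longrightarrow> c \<noteq> p \<Longrightarrow> A $$ (i, c) = 0"
  shows "det A = A $$ (i, p) * cofactor A i p"
proof -
  have "det A = (\<Sum>c<N. A $$ (i,c) * cofactor A i c)" by (rule laplace_expansion_row[OF A i])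
  also have "\<dots> = (\<Sum>c<N. if c = p then A $$ (i,p) * cofactor A i p else 0)"
    by (rule sum.cong) (use z in auto)
  also have "\<dots> = A $$ (i, p) * cofactor A i p" using p by simp
  finally show ?thesis .
qed

lemma border:
  assumes A: "A \<in> carrier_mat n n" and t: "t + 1 \<le> n"
    and rn: "\<And>a. a < t \<Longrightarrow> r a < n"
    and ynz: "\<And>c. 1 \<le> c \<Longrightarrow> c \<le> n \<Longrightarrow> y c \<noteq> 0"
  shows "det (mat t t (\<lambda>(a, b). (A * Wmat n y) $$ (r a, b))) =
    (-1) ^ t * det (mat (Suc t) (Suc t) (\<lambda>(a, b). if a < t then A $$ (r a, b) else vv y b))"
proof -
  define X where "X = mat (Suc t) (Suc t) (\<lambda>(a, b). if a < t then A $$ (r a, b) else vv y b)"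
  define U where "U = mat (Suc t) (Suc t) (\<lambda>(p, b). if b < t then (if p = b then y (b+1) else if p = b + 1 then 1 else 0) else (if p = t then 1 else 0))"
  define Bs where "Bs = mat t t (\<lambda>(a, b). (A * Wmat n y) $$ (r a, b))"
  have Xc: "X \<in> carrier_mat (Suc t) (Suc t)" and Uc: "U \<in> carrier_mat (Suc t) (Suc t)"
    unfolding X_def U_def by auto
  have XUc: "X * U \<in> carrier_mat (Suc t) (Suc t)" using Xc Uc by simp
  have XUi: "(X * U) $$ (a, b) = (\<Sum>p<Suc t. X $$ (a, p) * U $$ (p, b))" if "a < Suc t" "b < Suc t" for a b
    using that Xc Uc by (simp add: index_mult_mat(1) carrier_matD scalar_prod_def lessThan_atLeast0)
  have XU1: "(X * U) $$ (a, b) = X $$ (a, b) * y (b+1) + X $$ (a, b+1)" if "a < Suc t" "b < t" for a b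
  proof -
    have "(X * U) $$ (a, b) = (\<Sum>p<Suc t. (if p = b then X $$ (a, b) * y (b+1) else 0) + (if p = b + 1 then X $$ (a, b+1) else 0))"
      unfolding XUi[OF that(1) less_SucI[OF that(2)]] by (rule sum.cong) (use that in \<open>auto simp: U_def\<close>)
    also have "\<dots> = X $$ (a, b) * y (b+1) + X $$ (a, b+1)" using that by (simp add: sum.distrib)
    finally show ?thesis .
  qed
  have XU2: "(X * U) $$ (a, t) = X $$ (a, t)" if "a < Suc t" for a
  proof -
    have "(X * U) $$ (a, t) = (\<Sum>p<Suc t. if p = t then X $$ (a, t) else 0)"
      unfolding XUi[OF that lessI] by (rule sum.cong) (auto simp: U_def)
    then show ?thesis by simp
  qed
  have vvS: "vv y (b+1) = - vv y b * y (b+1)" for b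
    unfolding vv_def by (simp add: lessThan_Suc)
  have last_row: "(X * U) $$ (t, b) = 0" if "b < t" for b
    using XU1[of t b] that vvS by (simp add: X_def)
  have del: "mat_delete (X * U) t t = Bs"
  proof (rule eq_matI)
    fix a b assume ab: "a < dim_row Bs" "b < dim_col Bs"
    then have a: "a < t" and b: "b < t" unfolding Bs_def by auto
    have "mat_delete (X * U) t t $$ (a, b) = (X * U) $$ (a, b)"
      using a b Xc Uc unfolding mat_delete_def by simp
    also have "\<dots> = y (b+1) * A $$ (r a, b) + A $$ (r a, b+1)"
      using XU1[of a b] a b by (simp add: X_def)
    also have "\<dots> = (A * Wmat n y) $$ (r a, b)"
      using mult_Wmat_index[OF A rn[OF a], of b y] b t by simp
    finally show "mat_delete (X * U) t t $$ (a, b) = Bs $$ (a, b)" using a b unfolding Bs_def by simp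
  qed (use XUc in \<open>auto simp: Bs_def\<close>)
  have dXU: "det (X * U) = vv y t * det Bs"
  proof -
    have "det (X * U) = (X * U) $$ (t, t) * cofactor (X * U) t t"
      by (rule det_row_single[OF XUc]) (use last_row in auto)
    then show ?thesis unfolding cofactor_def del using XU2[of t] by (simp add: X_def)
  qed
  have dU: "det U = (\<Prod>b<t. y (b+1))"
  proof -
    have "det U = prod_list (diag_mat U)"
      by (rule det_lower_triangular[OF _ Uc]) (auto simp: U_def)
    also have "\<dots> = (\<Prod>b<Suc t. U $$ (b, b))" unfolding diag_mat_def using Uc
      by (simp add: prod_list_map_upt)
    also have "\<dots> = (\<Prod>b<t. y (b+1))" by (simp add: lessThan_Suc U_def)
    finally show ?thesis .
  qed
  have pnz: "(\<Prod>b<t. y (b+1)) \<noteq> 0" using ynz t by (auto simp: prod_zero_iff)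
  have "det X * (\<Prod>b<t. y (b+1)) = vv y t * det Bs"
    using det_mult[OF Xc Uc] dXU dU by simp
  then have "det X * (\<Prod>b<t. y (b+1)) = (-1) ^ t * (\<Prod>b<t. y (b+1)) * det Bs"
    unfolding vv_def by simp
  then have "det X = (-1) ^ t * det Bs" using pnz by (simp add: field_simps)
  then have "(-1) ^ t * det X = ((-1) ^ t * (-1) ^ t) * det Bs" by simp
  also have "(-1::complex) ^ t * (-1) ^ t = ((-1) * (-1)) ^ t" by (rule power_mult_distrib[symmetric])
  finally have "det Bs = (-1) ^ t * det X" by simp
  then show ?thesis unfolding Bs_def X_def .
qed


lemma K_rel:
  assumes A: "A \<in> carrier_mat n n" and i1: "1 \<le> i" and ij: "i < j" and jn: "j \<le> n"
    and ynz: "\<And>c. 1 \<le> c \<Longrightarrow> c \<le> n \<Longrightarrow> y c \<noteq> 0"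
    and nz: "minor_int i (j-1) (A * Wmat n y) \<noteq> 0"
  shows "minor_int (i+1) j (A * Wmat n y) * minor_int i (j-1) A =
         minor_int i j A * minor_int (i+1) (j-1) (A * Wmat n y) + minor_int (i+1) j A * minor_int i (j-1) (A * Wmat n y)"
proof -
  define s where "s = j - i"
  have s1: "s \<ge> 1" and js: "j = i + s" using ij unfolding s_def by auto
  define B where "B = A * Wmat n y"
  define G where "G = mat (Suc (Suc s)) (Suc (Suc s)) (\<lambda>(a, b). if b = Suc s then (if a = s then 1 else 0)
      else if a \<le> s then A $$ (i - 1 + a, b) else vv y b)"
  have Gc: "G \<in> carrier_mat (Suc (Suc s)) (Suc (Suc s))" unfolding G_def by simp
  define X1 where "X1 = mat (Suc s) (Suc s) (\<lambda>(a, b). if a < s then A $$ (i - 1 + a, b) else vv y b)"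
  define X2 where "X2 = mat (Suc s) (Suc s) (\<lambda>(a, b). if a < s then A $$ (i + a, b) else vv y b)"
  define X3 where "X3 = mat s s (\<lambda>(a, b). if a < s - 1 then A $$ (i + a, b) else vv y b)"
  define tAij where "tAij = minor_int i j A"
  define tAij1 where "tAij1 = minor_int i (j-1) A"
  define tAi1j where "tAi1j = minor_int (i+1) j A"
  have bB1: "minor_int i (j-1) B = (-1) ^ s * det X1"
  proof -
    have "minor_int i (j-1) B = det (mat s s (\<lambda>(a, b). (A * Wmat n y) $$ (i - 1 + a, b)))"
      unfolding minor_int_def B_def using js s1 by (simp add: Suc_diff_le)
    also have "\<dots> = (-1) ^ s * det X1" unfolding X1_def
      by (rule border[OF A]) (use js jn i1 ynz in auto)
    finally show ?thesis .
  qed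
  have bB2: "minor_int (i+1) j B = (-1) ^ s * det X2"
  proof -
    have "minor_int (i+1) j B = det (mat s s (\<lambda>(a, b). (A * Wmat n y) $$ (i + a, b)))"
      unfolding minor_int_def B_def using js by simp
    also have "\<dots> = (-1) ^ s * det X2" unfolding X2_def
      by (rule border[OF A]) (use js jn i1 ynz in auto)
    finally show ?thesis .
  qed
  have bB3: "minor_int (i+1) (j-1) B = (-1) ^ (s - 1) * det X3"
  proof -
    have "minor_int (i+1) (j-1) B = det (mat (s-1) (s-1) (\<lambda>(a, b). (A * Wmat n y) $$ (i + a, b)))"
      unfolding minor_int_def B_def using js s1 by simp
    also have "\<dots> = (-1) ^ (s - 1) * det (mat (Suc (s-1)) (Suc (s-1)) (\<lambda>(a, b). if a < s - 1 then A $$ (i + a, b) else vv y b))"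
      by (rule border[OF A]) (use js jn i1 ynz in auto)
    also have "Suc (s - 1) = s" using s1 by simp
    finally show ?thesis unfolding X3_def .
  qed
  have dG: "det G = - det X1"
  proof -
    have "det G = G $$ (s, Suc s) * cofactor G s (Suc s)"
      by (rule det_col_single[OF Gc]) (auto simp: G_def)
    also have "mat_delete G s (Suc s) = X1"
      unfolding G_def X1_def mat_delete_def by (rule eq_matI) auto
    then have "cofactor G s (Suc s) = - det X1" unfolding cofactor_def by simp
    finally show ?thesis by (simp add: G_def)
  qed
  have X1nz: "det X1 \<noteq> 0" using nz bB1 unfolding B_def by auto
  have dGnz: "det G \<noteq> 0" using dG X1nz by simp
  have D11: "det (mat_delete G (Suc s) (Suc s)) = tAij"
  proof -
    have "mat_delete G (Suc s) (Suc s) = mat (j + 1 - i) (j + 1 - i) (\<lambda>(r, c). A $$ (i - 1 + r, c))"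
      unfolding G_def mat_delete_def using js by (intro eq_matI) auto
    then show ?thesis unfolding tAij_def minor_int_def by simp
  qed
  have D01: "det (mat_delete G 0 (Suc s)) = det X2"
  proof -
    have "mat_delete G 0 (Suc s) = X2"
      unfolding G_def X2_def mat_delete_def using i1 by (intro eq_matI) auto
    then show ?thesis by simp
  qed
  have D10: "det (mat_delete G (Suc s) s) = tAij1"
  proof -
    define Y where "Y = mat_delete G (Suc s) s"
    have Yc: "Y \<in> carrier_mat (Suc s) (Suc s)" unfolding Y_def using mat_delete_carrier[OF Gc] by simp
    have "det Y = Y $$ (s, s) * cofactor Y s s"
      by (rule det_col_single[OF Yc]) (auto simp: Y_def G_def mat_delete_def)
    also have "Y $$ (s, s) = 1" by (simp add: Y_def G_def mat_delete_def)
    also have "mat_delete Y s s = mat (j - 1 + 1 - i) (j - 1 + 1 - i) (\<lambda>(r, c). A $$ (i - 1 + r, c))"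
      unfolding Y_def G_def mat_delete_def using js i1 by (intro eq_matI) auto
    then have "cofactor Y s s = tAij1" unfolding cofactor_def tAij1_def minor_int_def by simp
    finally show ?thesis unfolding Y_def by simp
  qed
  have D00: "det (mat_delete G 0 s) = - det X3"
  proof -
    define Y where "Y = mat_delete G 0 s"
    have Yc: "Y \<in> carrier_mat (Suc s) (Suc s)" unfolding Y_def using mat_delete_carrier[OF Gc] by simp
    have "det Y = Y $$ (s - 1, s) * cofactor Y (s - 1) s"
      by (rule det_col_single[OF Yc]) (use s1 in \<open>auto simp: Y_def G_def mat_delete_def\<close>)
    also have "Y $$ (s - 1, s) = 1" using s1 by (simp add: Y_def G_def mat_delete_def)
    also have "mat_delete Y (s - 1) s = X3"
      unfolding Y_def G_def X3_def mat_delete_def using s1 i1 by (intro eq_matI) auto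
    then have "cofactor Y (s - 1) s = (-1) ^ (s - 1 + s) * det X3" unfolding cofactor_def by simp
    also have "(-1::complex) ^ (s - 1 + s) = -1"
    proof -
      have "s - 1 + s = Suc (2 * (s - 1))" using s1 by simp
      then show ?thesis by simp
    qed
    finally show ?thesis unfolding Y_def by simp
  qed
  have Dmid: "det (mat s s (\<lambda>(r, c). G $$ (Suc r, c))) = tAi1j"
  proof -
    have "mat s s (\<lambda>(r, c). G $$ (Suc r, c)) = mat (j + 1 - (i + 1)) (j + 1 - (i + 1)) (\<lambda>(r, c). A $$ (i + 1 - 1 + r, c))"
      unfolding G_def using js i1 by (intro eq_matI) auto
    then show ?thesis unfolding tAi1j_def minor_int_def by simp
  qed
  note dj = DJ[OF Gc dGnz, unfolded D11 D01 D10 D00 Dmid dG]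
  define \<sigma> where "\<sigma> = (-1::complex) ^ s"
  have \<sigma>2: "\<sigma> * \<sigma> = 1" unfolding \<sigma>_def by (simp flip: power_mult_distrib)
  have \<sigma>1: "(-1::complex) ^ (s - 1) = - \<sigma>"
  proof -
    have "(-1::complex) ^ s = (-1) ^ Suc (s - 1)" using s1 by simp
    then show ?thesis unfolding \<sigma>_def by simp
  qed
  have X1: "det X1 = \<sigma> * minor_int i (j-1) B" using bB1 \<sigma>2 unfolding \<sigma>_def by (simp add: mult.assoc[symmetric])
  have X2: "det X2 = \<sigma> * minor_int (i+1) j B" using bB2 \<sigma>2 unfolding \<sigma>_def by (simp add: mult.assoc[symmetric])
  have X3: "det X3 = - \<sigma> * minor_int (i+1) (j-1) B" using bB3 \<sigma>1 \<sigma>2 by (simp add: mult.assoc[symmetric])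
  have "\<sigma> * (minor_int (i+1) (j-1) B * tAij) - \<sigma> * (minor_int (i+1) j B * tAij1) = - \<sigma> * (minor_int i (j-1) B * tAi1j)"
    using dj unfolding X1 X2 X3 by (simp add: algebra_simps)
  then have "\<sigma> * (\<sigma> * (minor_int (i+1) (j-1) B * tAij) - \<sigma> * (minor_int (i+1) j B * tAij1)) = \<sigma> * (- \<sigma> * (minor_int i (j-1) B * tAi1j))"
    by simp
  moreover have ss: "\<And>x. \<sigma> * (\<sigma> * x) = x" using \<sigma>2 by (metis mult.assoc mult_1)
  ultimately have "minor_int (i+1) (j-1) B * tAij - minor_int (i+1) j B * tAij1 = - (minor_int i (j-1) B * tAi1j)"
    by (simp add: right_diff_distrib ss)
  then show ?thesis unfolding B_def tAij_def tAij1_def tAi1j_def by (simp add: algebra_simps)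
qed


definition tauM :: "nat \<Rightarrow> (nat \<Rightarrow> nat \<Rightarrow> complex) \<Rightarrow> nat \<Rightarrow> nat \<Rightarrow> nat \<Rightarrow> complex" where
  "tauM n x k i j = minor_int i j (Mprod n x k)"

lemma tauM_K:
  assumes k: "1 \<le> k" and i1: "1 \<le> i" and ij: "i < j" and jn: "j \<le> n"
    and ynz: "\<And>c. 1 \<le> c \<Longrightarrow> c \<le> n \<Longrightarrow> x k c \<noteq> 0"
    and nz: "tauM n x k i (j-1) \<noteq> 0"
  shows "tauM n x k (i+1) j * tauM n x (k-1) i (j-1) = tauM n x (k-1) i j * tauM n x k (i+1) (j-1) + tauM n x (k-1) (i+1) j * tauM n x k i (j-1)"
proof -
  obtain k' where k': "k = Suc k'" using k by (cases k) auto
  have M: "Mprod n x k = Mprod n x k' * Wmat n (x k)" using k' by simp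
  show ?thesis unfolding tauM_def M using K_rel[OF Mprod_carrier[of n x k'] i1 ij jn, where y="x k"] ynz nz k'
    unfolding tauM_def M by simp
qed

definition posc :: "complex \<Rightarrow> bool" where "posc z \<longleftrightarrow> (\<exists>r>0. z = complex_of_real r)"
definition nnc :: "complex \<Rightarrow> bool" where "nnc z \<longleftrightarrow> (\<exists>r\<ge>0. z = complex_of_real r)"

lemma posc_1: "posc 1" unfolding posc_def by (rule exI[of _ 1]) simp
lemma posc_nz: "posc z \<Longrightarrow> z \<noteq> 0" unfolding posc_def by auto
lemma posc_nnc: "posc z \<Longrightarrow> nnc z" unfolding posc_def nnc_def by auto
lemma nnc_0: "nnc 0" unfolding nnc_def by (rule exI[of _ 0]) simp
lemma posc_mult: "posc a \<Longrightarrow> posc b \<Longrightarrow> posc (a * b)"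
  unfolding posc_def by (metis mult_pos_pos of_real_mult)
lemma nnc_mult: "nnc a \<Longrightarrow> nnc b \<Longrightarrow> nnc (a * b)"
  unfolding nnc_def by (metis mult_nonneg_nonneg of_real_mult)
lemma posc_add: "posc a \<Longrightarrow> nnc b \<Longrightarrow> posc (a + b)"
  unfolding posc_def nnc_def by (metis add_pos_nonneg of_real_add)
lemma posc_div: "posc a \<Longrightarrow> posc b \<Longrightarrow> posc (a / b)"
  unfolding posc_def by (metis divide_pos_pos of_real_divide)

lemma tauM_pos_ones:
  assumes "k \<le> k0"
  shows "\<And>j i. j \<le> n \<Longrightarrow> 1 \<le> i \<Longrightarrow> i \<le> k + 1 \<Longrightarrow> i \<le> j + 1 \<Longrightarrow> posc (tauM n (\<lambda>a c. 1) k i j)"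
  using assms
proof (induction k)
  case 0
  then have "i = 1" by simp
  then show ?case using minor_1[of j n "\<lambda>a c. 1" 0] 0 unfolding tauM_def by (simp add: posc_1)
next
  case (Suc k)
  let ?t = "tauM n (\<lambda>a c. 1)"
  have IHk: "\<And>j i. j \<le> n \<Longrightarrow> 1 \<le> i \<Longrightarrow> i \<le> k + 1 \<Longrightarrow> i \<le> j + 1 \<Longrightarrow> posc (?t k i j)"
    using Suc.IH Suc.prems by simp
  have "\<forall>i. 1 \<le> i \<longrightarrow> i \<le> Suc k + 1 \<longrightarrow> i \<le> j + 1 \<longrightarrow> posc (?t (Suc k) i j)" if "j \<le> n" for j
    using that
  proof (induction j)
    case 0
    show ?case
    proof (intro allI impI)
      fix i assume "1 \<le> i" "i \<le> Suc k + 1" "i \<le> 0 + 1"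
      then have "i = 1" by simp
      then show "posc (?t (Suc k) i 0)" using minor_empty[of 0] unfolding tauM_def by (simp add: posc_1)
    qed
  next
    case (Suc j)
    have IHj: "\<And>i. 1 \<le> i \<Longrightarrow> i \<le> Suc k + 1 \<Longrightarrow> i \<le> j + 1 \<Longrightarrow> posc (?t (Suc k) i j)"
      using Suc.IH Suc.prems by simp
    show ?case
    proof (intro allI impI)
      fix i assume i: "1 \<le> i" "i \<le> Suc k + 1" "i \<le> Suc j + 1"
      show "posc (?t (Suc k) i (Suc j))"
      proof (cases "i = 1")
        case True
        then show ?thesis using minor_1[of "Suc j" n "\<lambda>a c. 1" "Suc k"] Suc.prems unfolding tauM_def by (simp add: posc_1)
      next
        case False
        then obtain i' where i': "i = Suc i'" "1 \<le> i'" using i by (cases i) auto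
        show ?thesis
        proof (cases "i' = Suc j")
          case True
          then show ?thesis using minor_empty[of "Suc j"] i' unfolding tauM_def by (simp add: posc_1)
        next
          case False
          then have i'j: "i' < Suc j" using i i' by simp
          have nz: "?t (Suc k) i' (Suc j - 1) \<noteq> 0"
            using IHj[of i'] i i' i'j by (simp add: posc_nz)
          have K: "?t (Suc k) (i'+1) (Suc j) * ?t k i' j = ?t k i' (Suc j) * ?t (Suc k) (i'+1) j + ?t k (i'+1) (Suc j) * ?t (Suc k) i' j"
            using tauM_K[of "Suc k" i' "Suc j" n "\<lambda>a c. 1", OF _ i'(2) i'j Suc.prems _ nz] by simp
          have p1: "posc (?t k i' j)" using IHk[of j i'] Suc.prems i i' by simp
          have p2: "posc (?t k i' (Suc j))" using IHk[of "Suc j" i'] Suc.prems i i' by simp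
          have p3: "posc (?t (Suc k) (i'+1) j)" using IHj[of "i'+1"] i i' i'j by simp
          have p4: "posc (?t (Suc k) i' j)" using IHj[of i'] i i' i'j by simp
          have n5: "nnc (?t k (i'+1) (Suc j))"
          proof (cases "i' + 1 \<le> k + 1")
            case True then show ?thesis using IHk[of "Suc j" "i'+1"] Suc.prems i'j by (simp add: posc_nnc)
          next
            case False
            then have "?t k (i'+1) (Suc j) = 0" unfolding tauM_def
              by (intro minor_zero) (use i i' i'j Suc.prems in auto)
            then show ?thesis by (simp add: nnc_0)
          qed
          have eq: "?t (Suc k) (i'+1) (Suc j) = (?t k i' (Suc j) * ?t (Suc k) (i'+1) j + ?t k (i'+1) (Suc j) * ?t (Suc k) i' j) / ?t k i' j"
            using K posc_nz[OF p1] by (simp add: field_simps)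
          have "posc ((?t k i' (Suc j) * ?t (Suc k) (i'+1) j + ?t k (i'+1) (Suc j) * ?t (Suc k) i' j) / ?t k i' j)"
            by (intro posc_div posc_add posc_mult nnc_mult posc_nnc p1 p2 p3 p4 n5)
          then show ?thesis using eq i'(1) by simp
        qed
      qed
    qed
  qed
  then show ?case using Suc.prems by simp
qed


type_synonym mpoly = "(nat \<Rightarrow> nat \<Rightarrow> nat) \<Rightarrow> real"

definition mmono :: "nat \<Rightarrow> nat \<Rightarrow> (nat \<Rightarrow> nat \<Rightarrow> nat) \<Rightarrow> (nat \<Rightarrow> nat \<Rightarrow> complex) \<Rightarrow> complex" where
  "mmono m n e y = (\<Prod>a = 1..m. \<Prod>j = 1..n. y a j ^ e a j)"

definition eadd :: "(nat \<Rightarrow> nat \<Rightarrow> nat) \<Rightarrow> (nat \<Rightarrow> nat \<Rightarrow> nat) \<Rightarrow> (nat \<Rightarrow> nat \<Rightarrow> nat)" where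
  "eadd e1 e2 = (\<lambda>a j. e1 a j + e2 a j)"

lemma poly_eval_mono: "poly_eval m n p y = (\<Sum>e\<in>{e. p e \<noteq> 0}. of_real (p e) * mmono m n e y)"
  unfolding poly_eval_def mmono_def ..

lemma mono_eadd: "mmono m n (eadd e1 e2) y = mmono m n e1 y * mmono m n e2 y"
  unfolding mmono_def eadd_def by (simp add: power_add prod.distrib)

lemma poly_eval_superset:
  assumes "finite S" "{e. p e \<noteq> 0} \<subseteq> S"
  shows "poly_eval m n p y = (\<Sum>e\<in>S. of_real (p e) * mmono m n e y)"
  unfolding poly_eval_mono by (rule sum.mono_neutral_left) (use assms in auto)

definition rep :: "nat \<Rightarrow> nat \<Rightarrow> ((nat \<Rightarrow> nat \<Rightarrow> complex) \<Rightarrow> complex) \<Rightarrow> bool" where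
  "rep m n f \<longleftrightarrow> (\<exists>p. nonneg_poly m n p \<and> (\<forall>y. f y = poly_eval m n p y))"

lemma rep_intro: "nonneg_poly m n p \<Longrightarrow> (\<And>y. f y = poly_eval m n p y) \<Longrightarrow> rep m n f"
  unfolding rep_def by blast

lemma rep_cong: "rep m n f \<Longrightarrow> (\<And>y. f y = g y) \<Longrightarrow> rep m n g"
  unfolding rep_def by auto

lemma rep_const:
  assumes "c \<ge> 0"
  shows "rep m n (\<lambda>y. of_real c)"
proof -
  define e0 :: "nat \<Rightarrow> nat \<Rightarrow> nat" where "e0 = (\<lambda>a j. 0)"
  define p :: mpoly where "p e = (if e = e0 then c else 0)" for e
  have supp: "{e. p e \<noteq> 0} \<subseteq> {e0}" unfolding p_def by auto
  have np: "nonneg_poly m n p"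
  proof -
    have "finite {e. p e \<noteq> 0}" using finite_subset[OF supp] by simp
    moreover have "\<forall>a' j'. \<not> (1 \<le> a' \<and> a' \<le> m \<and> 1 \<le> j' \<and> j' \<le> n) \<longrightarrow> e a' j' = 0" if "p e \<noteq> 0" for e
    proof -
      have "e = e0" using that supp by auto
      then show ?thesis unfolding e0_def by auto
    qed
    moreover have "p e \<ge> 0" for e unfolding p_def using assms by simp
    ultimately show ?thesis unfolding nonneg_poly_def is_poly_def by blast
  qed
  have "of_real c = poly_eval m n p y" for y
  proof -
    have "poly_eval m n p y = (\<Sum>e\<in>{e0}. of_real (p e) * mmono m n e y)"
      by (rule poly_eval_superset) (use supp in auto)
    also have "\<dots> = of_real c" by (simp add: p_def mmono_def e0_def)
    finally show ?thesis by simp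
  qed
  then show ?thesis unfolding rep_def using np by blast
qed

lemma rep_var:
  assumes "1 \<le> a" "a \<le> m" "1 \<le> c" "c \<le> n"
  shows "rep m n (\<lambda>y. y a c)"
proof -
  define e1 :: "nat \<Rightarrow> nat \<Rightarrow> nat" where "e1 = (\<lambda>a' j'. if a' = a \<and> j' = c then 1 else 0)"
  define p :: mpoly where "p e = (if e = e1 then 1 else 0)" for e
  have supp: "{e. p e \<noteq> 0} = {e1}" unfolding p_def by auto
  have np: "nonneg_poly m n p"
  proof -
    have "finite {e. p e \<noteq> 0}" unfolding supp by simp
    moreover have "\<forall>a' j'. \<not> (1 \<le> a' \<and> a' \<le> m \<and> 1 \<le> j' \<and> j' \<le> n) \<longrightarrow> e a' j' = 0" if "p e \<noteq> 0" for e
    proof -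
      have "e = e1" using that supp by auto
      then show ?thesis using assms unfolding e1_def by auto
    qed
    moreover have "p e \<ge> 0" for e unfolding p_def by simp
    ultimately show ?thesis unfolding nonneg_poly_def is_poly_def by blast
  qed
  have mono1: "mmono m n e1 y = y a c" for y
  proof -
    have "mmono m n e1 y = (\<Prod>a'=1..m. \<Prod>j'=1..n. if a' = a \<and> j' = c then y a c else 1)"
      unfolding mmono_def e1_def by (intro prod.cong) auto
    also have "\<dots> = (\<Prod>a'=1..m. if a' = a then y a c else 1)"
      by (rule prod.cong) (use assms in \<open>auto simp: prod.delta\<close>)
    also have "\<dots> = y a c" using assms by (simp add: prod.delta)
    finally show ?thesis .
  qed
  have "y a c = poly_eval m n p y" for y
    unfolding poly_eval_mono supp by (simp add: p_def mono1)
  then show ?thesis unfolding rep_def using np by blast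
qed

lemma rep_add:
  assumes "rep m n f" "rep m n g"
  shows "rep m n (\<lambda>y. f y + g y)"
proof -
  obtain p where p: "nonneg_poly m n p" "\<And>y. f y = poly_eval m n p y" using assms(1) unfolding rep_def by auto
  obtain q where q: "nonneg_poly m n q" "\<And>y. g y = poly_eval m n q y" using assms(2) unfolding rep_def by auto
  define r :: mpoly where "r e = p e + q e" for e
  have fp: "finite {e. p e \<noteq> 0}" "finite {e. q e \<noteq> 0}" using p(1) q(1) unfolding nonneg_poly_def is_poly_def by auto
  have nn: "p e \<ge> 0" "q e \<ge> 0" for e using p(1) q(1) unfolding nonneg_poly_def by auto
  have supp: "{e. r e \<noteq> 0} \<subseteq> {e. p e \<noteq> 0} \<union> {e. q e \<noteq> 0}" unfolding r_def by auto
  have np: "nonneg_poly m n r"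
  proof -
    have "r e \<noteq> 0 \<Longrightarrow> p e \<noteq> 0 \<or> q e \<noteq> 0" for e unfolding r_def by auto
    moreover have "finite {e. r e \<noteq> 0}" using finite_subset[OF supp] fp by simp
    moreover have "r e \<ge> 0" for e unfolding r_def using nn by simp
    ultimately show ?thesis using p(1) q(1) unfolding nonneg_poly_def is_poly_def by blast
  qed
  have "f y + g y = poly_eval m n r y" for y
  proof -
    let ?S = "{e. p e \<noteq> 0} \<union> {e. q e \<noteq> 0}"
    have "f y = (\<Sum>e\<in>?S. of_real (p e) * mmono m n e y)" unfolding p(2) by (rule poly_eval_superset) (use fp in auto)
    moreover have "g y = (\<Sum>e\<in>?S. of_real (q e) * mmono m n e y)" unfolding q(2) by (rule poly_eval_superset) (use fp in auto)
    moreover have "poly_eval m n r y = (\<Sum>e\<in>?S. of_real (r e) * mmono m n e y)" by (rule poly_eval_superset) (use fp supp in auto)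
    ultimately show ?thesis by (simp add: r_def sum.distrib distrib_right)
  qed
  then show ?thesis unfolding rep_def using np by blast
qed

lemma rep_mult:
  assumes "rep m n f" "rep m n g"
  shows "rep m n (\<lambda>y. f y * g y)"
proof -
  obtain p where p: "nonneg_poly m n p" "\<And>y. f y = poly_eval m n p y" using assms(1) unfolding rep_def by auto
  obtain q where q: "nonneg_poly m n q" "\<And>y. g y = poly_eval m n q y" using assms(2) unfolding rep_def by auto
  define Sp where "Sp = {e. p e \<noteq> 0}"
  define Sq where "Sq = {e. q e \<noteq> 0}"
  have fp: "finite Sp" "finite Sq" using p(1) q(1) unfolding nonneg_poly_def is_poly_def Sp_def Sq_def by auto
  have nn: "p e \<ge> 0" "q e \<ge> 0" for e using p(1) q(1) unfolding nonneg_poly_def by auto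
  define r :: mpoly where "r e = (\<Sum>pr\<in>Sp \<times> Sq. if eadd (fst pr) (snd pr) = e then p (fst pr) * q (snd pr) else 0)" for e
  define T where "T = (\<lambda>pr. eadd (fst pr) (snd pr)) ` (Sp \<times> Sq)"
  have fT: "finite T" unfolding T_def using fp by simp
  have rz: "r e = 0" if "e \<notin> T" for e
    unfolding r_def
  proof (rule sum.neutral, rule ballI)
    fix pr assume "pr \<in> Sp \<times> Sq"
    then have "eadd (fst pr) (snd pr) \<in> T" unfolding T_def by (rule imageI)
    then have "eadd (fst pr) (snd pr) \<noteq> e" using that by auto
    then show "(if eadd (fst pr) (snd pr) = e then p (fst pr) * q (snd pr) else 0) = 0" by simp
  qed
  have supp: "{e. r e \<noteq> 0} \<subseteq> T" using rz by blast
  have np: "nonneg_poly m n r"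
  proof -
    have nr: "r e \<ge> 0" for e unfolding r_def using nn by (intro sum_nonneg) auto
    have box: "\<forall>a j. \<not> (1 \<le> a \<and> a \<le> m \<and> 1 \<le> j \<and> j \<le> n) \<longrightarrow> e a j = 0" if "r e \<noteq> 0" for e
    proof -
      have "e \<in> T" using supp that by auto
      then obtain e1 e2 where "e1 \<in> Sp" "e2 \<in> Sq" "e = eadd e1 e2" unfolding T_def by auto
      then show ?thesis using p(1) q(1) unfolding nonneg_poly_def is_poly_def Sp_def Sq_def eadd_def by auto
    qed
    show ?thesis unfolding nonneg_poly_def is_poly_def using nr box finite_subset[OF supp fT] by auto
  qed
  have "f y * g y = poly_eval m n r y" for y
  proof -
    have "poly_eval m n r y = (\<Sum>e\<in>T. of_real (r e) * mmono m n e y)" by (rule poly_eval_superset[OF fT supp])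
    also have "\<dots> = (\<Sum>e\<in>T. \<Sum>pr\<in>Sp \<times> Sq. if eadd (fst pr) (snd pr) = e then of_real (p (fst pr) * q (snd pr)) * mmono m n e y else 0)"
      unfolding r_def of_real_sum sum_distrib_right by (intro sum.cong refl) auto
    also have "\<dots> = (\<Sum>pr\<in>Sp \<times> Sq. \<Sum>e\<in>T. if eadd (fst pr) (snd pr) = e then of_real (p (fst pr) * q (snd pr)) * mmono m n e y else 0)"
      by (rule sum.swap)
    also have "\<dots> = (\<Sum>pr\<in>Sp \<times> Sq. of_real (p (fst pr) * q (snd pr)) * mmono m n (eadd (fst pr) (snd pr)) y)"
    proof (rule sum.cong[OF refl])
      fix pr assume "pr \<in> Sp \<times> Sq"
      then have "eadd (fst pr) (snd pr) \<in> T" unfolding T_def by auto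
      then show "(\<Sum>e\<in>T. if eadd (fst pr) (snd pr) = e then of_real (p (fst pr) * q (snd pr)) * mmono m n e y else 0) =
          of_real (p (fst pr) * q (snd pr)) * mmono m n (eadd (fst pr) (snd pr)) y"
        using fT by (simp add: sum.delta)
    qed
    also have "\<dots> = (\<Sum>pr\<in>Sp \<times> Sq. (of_real (p (fst pr)) * mmono m n (fst pr) y) * (of_real (q (snd pr)) * mmono m n (snd pr) y))"
      by (rule sum.cong) (auto simp: mono_eadd)
    also have "\<dots> = (\<Sum>e1\<in>Sp. of_real (p e1) * mmono m n e1 y) * (\<Sum>e2\<in>Sq. of_real (q e2) * mmono m n e2 y)"
      by (simp add: sum_product sum.cartesian_product case_prod_unfold)
    also have "\<dots> = f y * g y" unfolding p(2) q(2) poly_eval_mono Sp_def Sq_def ..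
    finally show ?thesis by simp
  qed
  then show ?thesis unfolding rep_def using np by blast
qed

lemma rep_sum:
  assumes "finite I" "\<And>i. i \<in> I \<Longrightarrow> rep m n (f i)"
  shows "rep m n (\<lambda>y. \<Sum>i\<in>I. f i y)"
  using assms
proof (induction I rule: finite_induct)
  case empty then show ?case using rep_const[of 0 m n] by simp
next
  case (insert i I)
  have "rep m n (\<lambda>y. f i y + (\<Sum>i\<in>I. f i y))" by (rule rep_add) (use insert in auto)
  then show ?case by (rule rep_cong) (use insert in simp)
qed

lemma rep_prod:
  assumes "finite I" "\<And>i. i \<in> I \<Longrightarrow> rep m n (f i)"
  shows "rep m n (\<lambda>y. \<Prod>i\<in>I. f i y)"
  using assms
proof (induction I rule: finite_induct)
  case empty then show ?case using rep_const[of 1 m n] by simp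
next
  case (insert i I)
  have "rep m n (\<lambda>y. f i y * (\<Prod>i\<in>I. f i y))" by (rule rep_mult) (use insert in auto)
  then show ?case by (rule rep_cong) (use insert in simp)
qed


definition gmin :: "complex mat \<Rightarrow> nat \<Rightarrow> (nat \<Rightarrow> nat) \<Rightarrow> (nat \<Rightarrow> nat) \<Rightarrow> complex" where
  "gmin A s r c = det (mat s s (\<lambda>(a, b). A $$ (r a, c b)))"

definition sinc :: "nat \<Rightarrow> (nat \<Rightarrow> nat) \<Rightarrow> bool" where
  "sinc s c \<longleftrightarrow> (\<forall>a b. a < b \<longrightarrow> b < s \<longrightarrow> c a < c b)"

lemma sinc_consec:
  assumes "\<And>b. b + 1 < s \<Longrightarrow> c b < c (b + 1)"
  shows "sinc s c"
  unfolding sinc_def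
proof (intro allI impI)
  fix a b assume ab: "a < b" "b < s"
  then show "c a < c b"
  proof (induction b)
    case 0 then show ?case by simp
  next
    case (Suc b)
    show ?case
    proof (cases "a = b")
      case True then show ?thesis using assms[of b] Suc.prems by simp
    next
      case False
      then have "c a < c b" using Suc by simp
      also have "c b < c (Suc b)" using assms[of b] Suc.prems by simp
      finally show ?thesis .
    qed
  qed
qed

lemma det_col_leibniz:
  assumes "M \<in> carrier_mat s s"
  shows "det M = (\<Sum>p\<in>{p. p permutes {0..<s}}. signof p * (\<Prod>b\<in>{0..<s}. M $$ (p b, b)))"
proof -
  have "det M = det (transpose_mat M)" using det_transpose[OF assms] by simp
  also have "\<dots> = (\<Sum>p\<in>{p. p permutes {0..<s}}. signof p * (\<Prod>b\<in>{0..<s}. transpose_mat M $$ (b, p b)))"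
    by (rule det_def') (use assms in simp)
  also have "\<dots> = (\<Sum>p\<in>{p. p permutes {0..<s}}. signof p * (\<Prod>b\<in>{0..<s}. M $$ (p b, b)))"
  proof (rule sum.cong[OF refl])
    fix p assume p: "p \<in> {p. p permutes {0..<s}}"
    have "\<And>b. b \<in> {0..<s} \<Longrightarrow> p b < s" using p permutes_in_image by fastforce
    then show "signof p * (\<Prod>b\<in>{0..<s}. transpose_mat M $$ (b, p b)) = signof p * (\<Prod>b\<in>{0..<s}. M $$ (p b, b))"
      using assms by (auto intro!: prod.cong)
  qed
  finally show ?thesis .
qed

lemma multilin:
  fixes u v :: "nat \<Rightarrow> complex" and P Q :: "nat \<Rightarrow> nat \<Rightarrow> complex"
  shows "det (mat s s (\<lambda>(a, b). u b * P a b + v b * Q a b)) =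
    (\<Sum>X\<in>Pow {0..<s}. (\<Prod>b\<in>X. u b) * (\<Prod>b\<in>{0..<s} - X. v b) *
        det (mat s s (\<lambda>(a, b). if b \<in> X then P a b else Q a b)))"
proof -
  let ?S = "{0..<s}"
  let ?Pm = "{p. p permutes ?S}"
  have "det (mat s s (\<lambda>(a, b). u b * P a b + v b * Q a b)) =
      (\<Sum>p\<in>?Pm. signof p * (\<Prod>b\<in>?S. u b * P (p b) b + v b * Q (p b) b))"
  proof -
    have "det (mat s s (\<lambda>(a, b). u b * P a b + v b * Q a b)) = (\<Sum>p\<in>?Pm. signof p * (\<Prod>b\<in>?S. mat s s (\<lambda>(a, b). u b * P a b + v b * Q a b) $$ (p b, b)))"
      by (rule det_col_leibniz) simp
    also have "\<dots> = (\<Sum>p\<in>?Pm. signof p * (\<Prod>b\<in>?S. u b * P (p b) b + v b * Q (p b) b))"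
    proof (rule sum.cong[OF refl])
      fix p assume p: "p \<in> ?Pm"
      have "\<And>b. b \<in> ?S \<Longrightarrow> p b < s" using p permutes_in_image by fastforce
      then show "signof p * (\<Prod>b\<in>?S. mat s s (\<lambda>(a, b). u b * P a b + v b * Q a b) $$ (p b, b)) = signof p * (\<Prod>b\<in>?S. u b * P (p b) b + v b * Q (p b) b)"
        by (auto intro!: prod.cong)
    qed
    finally show ?thesis .
  qed
  also have "\<dots> = (\<Sum>p\<in>?Pm. signof p * (\<Sum>X\<in>Pow ?S. (\<Prod>b\<in>X. u b * P (p b) b) * (\<Prod>b\<in>?S - X. v b * Q (p b) b)))"
    by (simp add: prod_add)
  also have "\<dots> = (\<Sum>p\<in>?Pm. \<Sum>X\<in>Pow ?S. (\<Prod>b\<in>X. u b) * (\<Prod>b\<in>?S - X. v b) * (signof p * (\<Prod>b\<in>?S. if b \<in> X then P (p b) b else Q (p b) b)))"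
  proof (rule sum.cong[OF refl])
    fix p
    show "signof p * (\<Sum>X\<in>Pow ?S. (\<Prod>b\<in>X. u b * P (p b) b) * (\<Prod>b\<in>?S - X. v b * Q (p b) b)) =
      (\<Sum>X\<in>Pow ?S. (\<Prod>b\<in>X. u b) * (\<Prod>b\<in>?S - X. v b) * (signof p * (\<Prod>b\<in>?S. if b \<in> X then P (p b) b else Q (p b) b)))"
      unfolding sum_distrib_left
    proof (rule sum.cong[OF refl])
      fix X assume X: "X \<in> Pow ?S"
      have "(\<Prod>b\<in>?S. if b \<in> X then P (p b) b else Q (p b) b) = (\<Prod>b\<in>X. P (p b) b) * (\<Prod>b\<in>?S - X. Q (p b) b)"
      proof -
        have "(\<Prod>b\<in>?S. if b \<in> X then P (p b) b else Q (p b) b) = (\<Prod>b\<in>?S \<inter> {b. b \<in> X}. P (p b) b) * (\<Prod>b\<in>?S \<inter> - {b. b \<in> X}. Q (p b) b)"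
          by (rule prod.If_cases) simp
        also have "?S \<inter> {b. b \<in> X} = X" using X by auto
        also have "?S \<inter> - {b. b \<in> X} = ?S - X" by auto
        finally show ?thesis .
      qed
      then show "signof p * ((\<Prod>b\<in>X. u b * P (p b) b) * (\<Prod>b\<in>?S - X. v b * Q (p b) b)) =
          (\<Prod>b\<in>X. u b) * (\<Prod>b\<in>?S - X. v b) * (signof p * (\<Prod>b\<in>?S. if b \<in> X then P (p b) b else Q (p b) b))"
        by (simp add: prod.distrib algebra_simps)
    qed
  qed
  also have "\<dots> = (\<Sum>X\<in>Pow ?S. \<Sum>p\<in>?Pm. (\<Prod>b\<in>X. u b) * (\<Prod>b\<in>?S - X. v b) * (signof p * (\<Prod>b\<in>?S. if b \<in> X then P (p b) b else Q (p b) b)))"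
    by (rule sum.swap)
  also have "\<dots> = (\<Sum>X\<in>Pow ?S. (\<Prod>b\<in>X. u b) * (\<Prod>b\<in>?S - X. v b) * det (mat s s (\<lambda>(a, b). if b \<in> X then P a b else Q a b)))"
  proof (rule sum.cong[OF refl])
    fix X
    have "det (mat s s (\<lambda>(a, b). if b \<in> X then P a b else Q a b)) = (\<Sum>p\<in>?Pm. signof p * (\<Prod>b\<in>?S. mat s s (\<lambda>(a, b). if b \<in> X then P a b else Q a b) $$ (p b, b)))"
      by (rule det_col_leibniz) simp
    also have "\<dots> = (\<Sum>p\<in>?Pm. signof p * (\<Prod>b\<in>?S. if b \<in> X then P (p b) b else Q (p b) b))"
    proof (rule sum.cong[OF refl])
      fix p assume p: "p \<in> ?Pm"
      have "\<And>b. b \<in> ?S \<Longrightarrow> p b < s" using p permutes_in_image by fastforce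
      then show "signof p * (\<Prod>b\<in>?S. mat s s (\<lambda>(a, b). if b \<in> X then P a b else Q a b) $$ (p b, b)) = signof p * (\<Prod>b\<in>?S. if b \<in> X then P (p b) b else Q (p b) b)"
        by (auto intro!: prod.cong)
    qed
    finally show "(\<Sum>p\<in>?Pm. (\<Prod>b\<in>X. u b) * (\<Prod>b\<in>?S - X. v b) * (signof p * (\<Prod>b\<in>?S. if b \<in> X then P (p b) b else Q (p b) b))) =
        (\<Prod>b\<in>X. u b) * (\<Prod>b\<in>?S - X. v b) * det (mat s s (\<lambda>(a, b). if b \<in> X then P a b else Q a b))"
      by (simp add: sum_distrib_left)
  qed
  finally show ?thesis .
qed


lemma gmin_one:
  assumes r: "sinc s r" and c: "sinc s c" and rn: "\<And>a. a < s \<Longrightarrow> r a < n" and cn: "\<And>b. b < s \<Longrightarrow> c b < n"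
  shows "gmin (1\<^sub>m n) s r c = (if \<forall>a<s. r a = c a then 1 else 0)"
proof (cases "\<forall>a<s. r a = c a")
  case True
  have inj: "(c a = c b) = (a = b)" if "a < s" "b < s" for a b
    using c that unfolding sinc_def by (metis nat_neq_iff)
  have "mat s s (\<lambda>(a, b). 1\<^sub>m n $$ (r a, c b)) = (1\<^sub>m s :: complex mat)"
    by (rule eq_matI) (auto simp: inj True rn cn)
  then show ?thesis unfolding gmin_def using True by simp
next
  case False
  define a0 where "a0 = (LEAST a. a < s \<and> r a \<noteq> c a)"
  have ex: "\<exists>a. a < s \<and> r a \<noteq> c a" using False by auto
  have a0: "a0 < s" "r a0 \<noteq> c a0" using LeastI_ex[OF ex] unfolding a0_def by auto
  have below: "r a = c a" if "a < a0" for a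
    using not_less_Least[of a "\<lambda>a. a < s \<and> r a \<noteq> c a"] that a0 unfolding a0_def by auto
  define A where "A = mat s s (\<lambda>(a, b). (1\<^sub>m n :: complex mat) $$ (r a, c b))"
  have Ac: "A \<in> carrier_mat s s" unfolding A_def by simp
  have Ai: "A $$ (a, b) = (if r a = c b then 1 else 0)" if "a < s" "b < s" for a b
    unfolding A_def using that rn cn by simp
  have "det A = 0"
  proof (cases "r a0 < c a0")
    case True
    have z: "A $$ (a0, b) = 0" if "b < s" for b
    proof -
      have "r a0 \<noteq> c b"
      proof (cases "b < a0")
        case True
        then have "c b = r b" using below by simp
        also have "r b < r a0" using r True a0 unfolding sinc_def by simp
        finally show ?thesis by simp
      next
        case False
        then have "c a0 \<le> c b" using c that unfolding sinc_def by (metis le_less nat_neq_iff)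
        then show ?thesis using \<open>r a0 < c a0\<close> by simp
      qed
      then show ?thesis using Ai[OF a0(1) that] by simp
    qed
    have "det A = (\<Sum>b<s. A $$ (a0, b) * cofactor A a0 b)" by (rule laplace_expansion_row[OF Ac a0(1)])
    also have "\<dots> = 0" using z by simp
    finally show ?thesis .
  next
    case False
    then have lt: "c a0 < r a0" using a0 by simp
    have z: "A $$ (a, a0) = 0" if "a < s" for a
    proof -
      have "r a \<noteq> c a0"
      proof (cases "a < a0")
        case True
        then have "r a = c a" using below by simp
        also have "c a < c a0" using c True a0 unfolding sinc_def by simp
        finally show ?thesis by simp
      next
        case False
        then have "r a0 \<le> r a" using r that unfolding sinc_def by (metis le_less nat_neq_iff)
        then show ?thesis using lt by simp
      qed
      then show ?thesis using Ai[OF that a0(1)] by simp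
    qed
    have "det A = (\<Sum>a<s. A $$ (a, a0) * cofactor A a a0)" by (rule laplace_expansion_column[OF Ac a0(1)])
    also have "\<dots> = 0" using z by simp
    finally show ?thesis .
  qed
  then show ?thesis unfolding gmin_def A_def using False by simp
qed


lemma gmin_rep:
  assumes "k \<le> m" "sinc s r" "\<And>a. a < s \<Longrightarrow> r a < n"
  shows "sinc s c \<Longrightarrow> (\<And>b. b < s \<Longrightarrow> c b < n) \<Longrightarrow> rep m n (\<lambda>y. gmin (Mprod n y k) s r c)"
  using assms(1)
proof (induction k arbitrary: c)
  case 0
  have "gmin (Mprod n y 0) s r c = of_real (if \<forall>a<s. r a = c a then 1 else 0)" for y
    using gmin_one[OF assms(2) 0(1) assms(3) 0(2)] by simp
  note eq = this
  have r0: "rep m n (\<lambda>y. of_real (if \<forall>a<s. r a = c a then 1 else 0))" by (rule rep_const) simp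
  show ?case by (rule rep_cong[OF r0]) (use eq in simp)
next
  case (Suc k)
  let ?S = "{0..<s}"
  define v where "v b = (if c b + 1 < n then 1 else 0 :: complex)" for b
  define cX where "cX X b = (if b \<in> X then c b else c b + 1)" for X b
  define trm where "trm X y = (\<Prod>b\<in>X. y (Suc k) (c b + 1)) * (\<Prod>b\<in>?S - X. v b) * gmin (Mprod n y k) s r (cX X)" for X y
  have expand: "gmin (Mprod n y (Suc k)) s r c = (\<Sum>X\<in>Pow ?S. trm X y)" for y
  proof -
    have "gmin (Mprod n y (Suc k)) s r c = det (mat s s (\<lambda>(a, b). y (Suc k) (c b + 1) * Mprod n y k $$ (r a, c b) + v b * Mprod n y k $$ (r a, c b + 1)))"
      unfolding gmin_def
      by (rule arg_cong[where f=det], rule eq_matI) (auto simp: Mprod_Suc_index assms(3) Suc.prems v_def simp del: Mprod.simps)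
    also have "\<dots> = (\<Sum>X\<in>Pow ?S. (\<Prod>b\<in>X. y (Suc k) (c b + 1)) * (\<Prod>b\<in>?S - X. v b) *
        det (mat s s (\<lambda>(a, b). if b \<in> X then Mprod n y k $$ (r a, c b) else Mprod n y k $$ (r a, c b + 1))))"
      by (rule multilin)
    also have "\<dots> = (\<Sum>X\<in>Pow ?S. trm X y)"
    proof (rule sum.cong[OF refl])
      fix X
      have "mat s s (\<lambda>(a, b). if b \<in> X then Mprod n y k $$ (r a, c b) else Mprod n y k $$ (r a, c b + 1)) = mat s s (\<lambda>(a, b). Mprod n y k $$ (r a, cX X b))"
        unfolding cX_def by (rule eq_matI) auto
      then show "(\<Prod>b\<in>X. y (Suc k) (c b + 1)) * (\<Prod>b\<in>?S - X. v b) *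
        det (mat s s (\<lambda>(a, b). if b \<in> X then Mprod n y k $$ (r a, c b) else Mprod n y k $$ (r a, c b + 1))) = trm X y"
        unfolding trm_def gmin_def by simp
    qed
    finally show ?thesis .
  qed
  have "rep m n (trm X)" if X: "X \<in> Pow ?S" for X
  proof (cases "\<exists>b\<in>?S - X. \<not> c b + 1 < n")
    case True
    then have "(\<Prod>b\<in>?S - X. v b) = 0" unfolding v_def by (intro prod_zero) auto
    then have "trm X y = of_real 0" for y unfolding trm_def by simp
    note eq = this
    have r0: "rep m n (\<lambda>y. of_real 0)" by (rule rep_const) simp
    show ?thesis by (rule rep_cong[OF r0]) (use eq in simp)
  next
    case False
    then have v1: "(\<Prod>b\<in>?S - X. v b) = 1" unfolding v_def by (intro prod.neutral) auto
    have cXn: "cX X b < n" if "b < s" for b using False Suc.prems(2)[OF that] that unfolding cX_def by auto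
    have prep: "rep m n (\<lambda>y. \<Prod>b\<in>X. y (Suc k) (c b + 1))"
    proof (rule rep_prod)
      show "finite X" using X finite_subset by auto
      fix b assume "b \<in> X"
      then have "b < s" using X by auto
      then show "rep m n (\<lambda>y. y (Suc k) (c b + 1))" using Suc.prems(2)[of b] Suc.prems(3)
        by (intro rep_var) auto
    qed
    show ?thesis
    proof (cases "\<forall>b. b + 1 < s \<longrightarrow> cX X b < cX X (b + 1)")
      case True
      then have "sinc s (cX X)" by (intro sinc_consec) auto
      then have "rep m n (\<lambda>y. gmin (Mprod n y k) s r (cX X))"
        using Suc.IH[of "cX X"] cXn Suc.prems(3) by auto
      then have "rep m n (\<lambda>y. (\<Prod>b\<in>X. y (Suc k) (c b + 1)) * gmin (Mprod n y k) s r (cX X))"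
        by (rule rep_mult[OF prep])
      then show ?thesis by (rule rep_cong) (simp add: trm_def v1)
    next
      case False
      then obtain b where b: "b + 1 < s" "\<not> cX X b < cX X (b + 1)" by auto
      have "c b < c (b + 1)" using Suc.prems(1) b unfolding sinc_def by simp
      then have eqc: "cX X b = cX X (b + 1)" using b unfolding cX_def by (auto split: if_splits)
      have "gmin (Mprod n y k) s r (cX X) = 0" for y
        unfolding gmin_def
      proof (rule det_identical_columns[of _ s b "b+1"])
        show "col (mat s s (\<lambda>(a, b). Mprod n y k $$ (r a, cX X b))) b = col (mat s s (\<lambda>(a, b). Mprod n y k $$ (r a, cX X b))) (b + 1)"
          using b eqc by (intro eq_vecI) auto
      qed (use b in auto)
      then have "trm X y = of_real 0" for y unfolding trm_def by simp
      note eq = this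
      have r0: "rep m n (\<lambda>y. of_real 0)" by (rule rep_const) simp
      show ?thesis by (rule rep_cong[OF r0]) (use eq in simp)
    qed
  qed
  then have "rep m n (\<lambda>y. \<Sum>X\<in>Pow ?S. trm X y)" by (intro rep_sum) auto
  then show ?case by (rule rep_cong) (rule expand[symmetric])
qed

lemma minor_rep:
  assumes "k \<le> m" "1 \<le> i" "j \<le> n"
  shows "rep m n (\<lambda>y. minor_int i j (Mprod n y k))"
proof -
  have "rep m n (\<lambda>y. gmin (Mprod n y k) (j + 1 - i) (\<lambda>a. i - 1 + a) (\<lambda>b. b))"
    by (rule gmin_rep) (use assms in \<open>auto simp: sinc_def\<close>)
  then show ?thesis by (rule rep_cong) (simp add: minor_int_def gmin_def)
qed


lemma identity_good:
  assumes m1: "1 \<le> m" and n1: "1 \<le> n"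
    and xnz: "\<And>a c. 1 \<le> a \<Longrightarrow> a \<le> m \<Longrightarrow> 1 \<le> c \<Longrightarrow> c \<le> n \<Longrightarrow> x a c \<noteq> 0"
    and good: "\<And>k i j. k \<le> m \<Longrightarrow> j \<le> n \<Longrightarrow> 1 \<le> i \<Longrightarrow> i \<le> k + 1 \<Longrightarrow> i \<le> j + 1 \<Longrightarrow> tauM n x k i j \<noteq> 0"
  shows "F_mat m n x = Phi (tauM n x) m n"
proof -
  interpret tau_sys "tauM n x" x m n
  proof
    fix k i j assume h: "1 \<le> k" "k \<le> m" "1 \<le> i" "i \<le> k" "i < j" "j \<le> n"
    show "tauM n x k (i + 1) j * tauM n x (k - 1) i (j - 1) =
          tauM n x (k - 1) i j * tauM n x k (i + 1) (j - 1) + tauM n x (k - 1) (i + 1) j * tauM n x k i (j - 1)"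
      by (rule tauM_K) (use h xnz good in auto)
  next
    fix k j assume h: "1 \<le> k" "k \<le> m" "j \<le> n"
    show "tauM n x k 1 j = (\<Prod>c = 1..j. x k c) * tauM n x (k - 1) 1 j"
    proof -
      obtain k' where k: "k = Suc k'" using h by (cases k) auto
      show ?thesis unfolding tauM_def using h k minor_1[of j n x k] minor_1[of j n x k'] 
        by (simp add: prod.cl_ivl_Suc mult.commute)
    qed
  next
    fix j assume "j \<le> n"
    then show "tauM n x 0 1 j = 1" unfolding tauM_def using minor_1[of j n x 0] by simp
  next
    fix k j show "tauM n x k (Suc j) j = 1" unfolding tauM_def by (rule minor_empty)
  next
    fix k j assume "k \<le> m" "k + 1 \<le> j" "j \<le> n"
    then show "tauM n x k (k + 1) j = 1" unfolding tauM_def by (intro minor_top) auto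
  next
    fix k i j assume "k \<le> m" "k + 2 \<le> i" "i \<le> j" "j \<le> n"
    then show "tauM n x k i j = 0" unfolding tauM_def by (intro minor_zero) auto
  next
    fix k i j assume "k \<le> m" "j \<le> n" "1 \<le> i" "i \<le> k + 1" "i \<le> j + 1"
    then show "tauM n x k i j \<noteq> 0" using good by auto
  next
    fix a c assume "1 \<le> a" "a \<le> m" "1 \<le> c" "c \<le> n"
    then show "x a c \<noteq> 0" using xnz by auto
  qed
  show ?thesis unfolding F_mat_def using main_identity[of m n] m1 n1 by simp
qed

lemma gRSK_P_pp: "gRSK_P m n x = pp (tauM n x) m"
  unfolding gRSK_P_def pp_def tauM_def by (intro ext) simp

lemma gRSK_Q_pp: "gRSK_Q m n x = (\<lambda>i l. pp (tauM n x) l i n)"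
  unfolding gRSK_Q_def pp_def tauM_def by (intro ext) simp

lemma cc_of_Phi:
  assumes "F_mat m n x = Phi (tauM n x) m n"
  shows "central_charge m n x = F_GT m n (gRSK_Q m n x) + (if m = n then gRSK_P m n x n n else 0)"
  using assms unfolding central_charge_def gRSK_P_pp gRSK_Q_pp Phi_def by simp


lemma rep_path_poly:
  assumes "rep m n f"
  shows "\<exists>Q. \<forall>z. f (\<lambda>a c. x a c + z * (1 - x a c)) = poly Q z"
proof -
  obtain p where p: "nonneg_poly m n p" "\<And>y. f y = poly_eval m n p y" using assms unfolding rep_def by auto
  define Q where "Q = (\<Sum>e\<in>{e. p e \<noteq> 0}. [:complex_of_real (p e):] * (\<Prod>a=1..m. \<Prod>c=1..n. [:x a c, 1 - x a c:] ^ e a c))"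
  have "f (\<lambda>a c. x a c + z * (1 - x a c)) = poly Q z" for z
    unfolding p(2) poly_eval_def Q_def by (simp add: poly_sum poly_prod algebra_simps)
  then show ?thesis by blast
qed

lemma F_GT_tendsto:
  assumes K1: "1 \<le> K"
    and lim: "\<And>i j. 1 \<le> i \<Longrightarrow> i \<le> K \<Longrightarrow> i \<le> j \<Longrightarrow> j \<le> N \<Longrightarrow> ((\<lambda>s. z s i j) \<longlongrightarrow> z0 i j) F"
    and nz: "\<And>i j. 1 \<le> i \<Longrightarrow> i \<le> K \<Longrightarrow> i \<le> j \<Longrightarrow> j \<le> N \<Longrightarrow> z0 i j \<noteq> 0"
  shows "((\<lambda>s. F_GT N K (z s)) \<longlongrightarrow> F_GT N K z0) F"
  unfolding F_GT_def
proof (intro tendsto_add tendsto_sum)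
  fix i j assume i: "i \<in> {1..K}" and j: "j \<in> {i..N - 1}"
  show "((\<lambda>s. z s i (j + 1) / z s i j) \<longlongrightarrow> z0 i (j + 1) / z0 i j) F"
    by (rule tendsto_divide) (use i j lim nz in auto)
next
  fix i j assume i: "i \<in> {1..K - 1}" and j: "j \<in> {i..N - 1}"
  show "((\<lambda>s. z s i j / z s (i + 1) (j + 1)) \<longlongrightarrow> z0 i j / z0 (i + 1) (j + 1)) F"
    by (rule tendsto_divide) (use i j lim nz in auto)
next
  show "((\<lambda>s. if K < N then z s K K else 0) \<longlongrightarrow> (if K < N then z0 K K else 0)) F"
    using lim[of K K] K1 by auto
qed


lemma conj1:
  assumes m1: "1 \<le> m" and n1: "1 \<le> n"
    and xnz: "\<forall>a j. 1 \<le> a \<and> a \<le> m \<and> 1 \<le> j \<and> j \<le> n \<longrightarrow> x a j \<noteq> 0"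
    and dom: "gRSK_defined m n x"
  shows "central_charge m n x = F_GT m n (gRSK_Q m n x) + (if m = n then gRSK_P m n x n n else 0)"
proof -
  define yp where "yp z = (\<lambda>a c. x a c + z * (1 - x a c))" for z :: complex
  have yp0: "yp 0 = x" unfolding yp_def by simp
  have yp1: "yp 1 = (\<lambda>a c. 1)" unfolding yp_def by simp
  have "\<forall>k i j. \<exists>Q. k \<le> m \<longrightarrow> 1 \<le> i \<longrightarrow> j \<le> n \<longrightarrow> (\<forall>z. tauM n (yp z) k i j = poly Q z)"
  proof (intro allI)
    fix k i j
    show "\<exists>Q. k \<le> m \<longrightarrow> 1 \<le> i \<longrightarrow> j \<le> n \<longrightarrow> (\<forall>z. tauM n (yp z) k i j = poly Q z)"
    proof (cases "k \<le> m \<and> 1 \<le> i \<and> j \<le> n")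
      case True
      then have "rep m n (\<lambda>y. minor_int i j (Mprod n y k))" by (intro minor_rep) auto
      then obtain Q where "\<forall>z. minor_int i j (Mprod n (yp z) k) = poly Q z"
        using rep_path_poly[of m n _ x] unfolding yp_def by blast
      then show ?thesis unfolding tauM_def by blast
    qed auto
  qed
  then obtain QF where QF: "\<And>k i j z. k \<le> m \<Longrightarrow> 1 \<le> i \<Longrightarrow> j \<le> n \<Longrightarrow> tauM n (yp z) k i j = poly (QF k i j) z"
    by metis
  define LP where "LP a c = [:x a c, 1 - x a c:]" for a c
  have LP: "yp z a c = poly (LP a c) z" for z a c unfolding yp_def LP_def by (simp add: algebra_simps)
  define GS where "GS = {(k, i, j). k \<le> m \<and> j \<le> n \<and> 1 \<le> i \<and> i \<le> k + 1 \<and> i \<le> j + 1}"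
  have fGS: "finite GS"
  proof -
    have "GS \<subseteq> {0..m} \<times> {0..n+1} \<times> {0..n}" unfolding GS_def by auto
    then show ?thesis by (rule finite_subset) simp
  qed
  have QFnz: "QF k i j \<noteq> 0" if "(k, i, j) \<in> GS" for k i j
  proof -
    have h: "k \<le> m" "j \<le> n" "1 \<le> i" "i \<le> k + 1" "i \<le> j + 1" using that unfolding GS_def by auto
    have "posc (tauM n (\<lambda>a c. 1) k i j)" using tauM_pos_ones[where k=k and k0=k and n=n and j=j and i=i] h by simp
    then have "poly (QF k i j) 1 \<noteq> 0" using QF[of k i j 1] h yp1 by (simp add: posc_nz)
    then show ?thesis by auto
  qed
  have LPnz: "LP a c \<noteq> 0" for a c
  proof -
    have "poly (LP a c) 1 = 1" unfolding LP_def by simp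
    then show ?thesis by auto
  qed
  define Z where "Z = (\<Union>kij\<in>GS. {z. poly (case kij of (k, i, j) \<Rightarrow> QF k i j) z = 0}) \<union> (\<Union>ac\<in>{1..m} \<times> {1..n}. {z. poly (case ac of (a, c) \<Rightarrow> LP a c) z = 0})"
  have fZ: "finite Z"
    unfolding Z_def
  proof (intro finite_UnI finite_UN_I fGS)
    fix kij assume "kij \<in> GS"
    then show "finite {z. poly (case kij of (k, i, j) \<Rightarrow> QF k i j) z = 0}"
      using QFnz by (auto intro!: poly_roots_finite split: prod.splits)
  next
    fix ac show "finite {z. poly (case ac of (a, c) \<Rightarrow> LP a c) z = 0}"
      using LPnz by (auto intro!: poly_roots_finite split: prod.splits)
  qed simp
  define R where "R = {s::real. 0 < s \<and> complex_of_real s \<in> Z}"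
  have fR: "finite R"
  proof -
    have "R \<subseteq> complex_of_real -` Z" unfolding R_def by auto
    moreover have "finite (complex_of_real -` Z)" by (rule finite_vimageI[OF fZ]) (auto simp: inj_on_def)
    ultimately show ?thesis by (rule finite_subset)
  qed
  define \<epsilon> where "\<epsilon> = (if R = {} then 1 else Min R)"
  have \<epsilon>0: "\<epsilon> > 0" unfolding \<epsilon>_def using fR by (auto simp: R_def)
  have notZ: "complex_of_real s \<notin> Z" if "0 < s" "s < \<epsilon>" for s
  proof
    assume "complex_of_real s \<in> Z"
    then have "s \<in> R" using that unfolding R_def by auto
    then have "Min R \<le> s" "R \<noteq> {}" using fR by auto
    then show False using that unfolding \<epsilon>_def by auto
  qed
  define RHS where "RHS y = F_GT m n (gRSK_Q m n y) + (if m = n then gRSK_P m n y n n else 0)" for y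
  have evi: "central_charge m n (yp (of_real s)) = RHS (yp (of_real s))" if sI: "s \<in> {0<..<\<epsilon>}" for s
  proof -
    have s: "0 < s" "s < \<epsilon>" using sI by auto
    have nZ: "complex_of_real s \<notin> Z" by (rule notZ[OF s])
    have ynz: "yp (of_real s) a c \<noteq> 0" if "1 \<le> a" "a \<le> m" "1 \<le> c" "c \<le> n" for a c
    proof -
      have "(a, c) \<in> {1..m} \<times> {1..n}" using that by auto
      then have "poly (LP a c) (of_real s) \<noteq> 0" using nZ unfolding Z_def by auto
      then show ?thesis using LP by simp
    qed
    have good: "tauM n (yp (of_real s)) k i j \<noteq> 0" if "k \<le> m" "j \<le> n" "1 \<le> i" "i \<le> k + 1" "i \<le> j + 1" for k i j
    proof -
      have "(k, i, j) \<in> GS" using that unfolding GS_def by auto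
      then have "poly (QF k i j) (of_real s) \<noteq> 0" using nZ unfolding Z_def by auto
      then show ?thesis using QF[of k i j "of_real s"] that by simp
    qed
    have "F_mat m n (yp (of_real s)) = Phi (tauM n (yp (of_real s))) m n"
      by (rule identity_good[OF m1 n1]) (use ynz good in auto)
    then show "central_charge m n (yp (of_real s)) = RHS (yp (of_real s))"
      unfolding RHS_def by (rule cc_of_Phi)
  qed
  have ev: "\<forall>\<^sub>F s in at_right (0::real). central_charge m n (yp (of_real s)) = RHS (yp (of_real s))"
    by (rule eventually_mono[OF eventually_at_right_real[OF \<epsilon>0]]) (rule evi)
  have mlim: "((\<lambda>s. minor_int i j (Mprod n (yp (of_real s)) k)) \<longlongrightarrow> minor_int i j (Mprod n x k)) (at_right 0)"
    if "k \<le> m" "1 \<le> i" "j \<le> n" for k i j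
  proof -
    have e: "minor_int i j (Mprod n (yp z) k) = poly (QF k i j) z" for z
      using QF[of k i j z] that unfolding tauM_def by simp
    have "((\<lambda>s::real. poly (QF k i j) (of_real s)) \<longlongrightarrow> poly (QF k i j) (of_real 0)) (at_right 0)"
      by (intro tendsto_intros)
    moreover have "poly (QF k i j) (of_real 0) = minor_int i j (Mprod n x k)" using e[of 0] yp0 by simp
    ultimately show ?thesis unfolding e by simp
  qed
  have dP: "minor_int i j (Mprod n x m) \<noteq> 0" "minor_int (i + 1) j (Mprod n x m) \<noteq> 0"
    if "1 \<le> i" "i \<le> m" "i \<le> j" "j \<le> n" for i j
    using dom that unfolding gRSK_defined_def by auto
  have dQ: "minor_int j' n (Mprod n x i') \<noteq> 0" "minor_int (j' + 1) n (Mprod n x i') \<noteq> 0"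
    if "1 \<le> j'" "j' \<le> n" "j' \<le> i'" "i' \<le> m" for j' i'
    using dom that unfolding gRSK_defined_def by auto
  have Plim: "((\<lambda>s. gRSK_P m n (yp (of_real s)) i j) \<longlongrightarrow> gRSK_P m n x i j) (at_right 0)"
    if "1 \<le> i" "i \<le> m" "i \<le> j" "j \<le> n" for i j
    unfolding gRSK_P_def by (rule tendsto_divide) (use mlim dP that in auto)
  have Pnz: "gRSK_P m n x i j \<noteq> 0" if "1 \<le> i" "i \<le> m" "i \<le> j" "j \<le> n" for i j
    unfolding gRSK_P_def using dP[OF that] by simp
  have Qlim: "((\<lambda>s. gRSK_Q m n (yp (of_real s)) j' i') \<longlongrightarrow> gRSK_Q m n x j' i') (at_right 0)"
    if "1 \<le> j'" "j' \<le> n" "j' \<le> i'" "i' \<le> m" for j' i'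
    unfolding gRSK_Q_def by (rule tendsto_divide) (use mlim dQ that in auto)
  have Qnz: "gRSK_Q m n x j' i' \<noteq> 0" if "1 \<le> j'" "j' \<le> n" "j' \<le> i'" "i' \<le> m" for j' i'
    unfolding gRSK_Q_def using dQ[OF that] by simp
  have L1: "((\<lambda>s. central_charge m n (yp (of_real s))) \<longlongrightarrow> central_charge m n x) (at_right 0)"
  proof -
    have "((\<lambda>s. F_mat m n (yp (of_real s))) \<longlongrightarrow> F_mat m n (yp (of_real 0))) (at_right 0)"
      unfolding F_mat_def yp_def by (intro tendsto_intros)
    moreover have "((\<lambda>s. F_GT n m (gRSK_P m n (yp (of_real s)))) \<longlongrightarrow> F_GT n m (gRSK_P m n x)) (at_right 0)"
      by (rule F_GT_tendsto[OF m1]) (use Plim Pnz in auto)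
    ultimately show ?thesis unfolding central_charge_def using yp0 by (simp add: tendsto_diff)
  qed
  have L2: "((\<lambda>s. RHS (yp (of_real s))) \<longlongrightarrow> RHS x) (at_right 0)"
    unfolding RHS_def
  proof (intro tendsto_add)
    show "((\<lambda>s. F_GT m n (gRSK_Q m n (yp (of_real s)))) \<longlongrightarrow> F_GT m n (gRSK_Q m n x)) (at_right 0)"
      by (rule F_GT_tendsto[OF n1]) (use Qlim Qnz in auto)
    show "((\<lambda>s. if m = n then gRSK_P m n (yp (of_real s)) n n else 0) \<longlongrightarrow> (if m = n then gRSK_P m n x n n else 0)) (at_right 0)"
      using Plim[of n n] n1 by auto
  qed
  have L1': "((\<lambda>s. RHS (yp (of_real s))) \<longlongrightarrow> central_charge m n x) (at_right 0)"
    using tendsto_cong[OF ev] L1 by simp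
  have "central_charge m n x = RHS x"
    by (rule tendsto_unique[OF _ L1' L2]) simp
  then show ?thesis unfolding RHS_def .
qed


definition RR :: "nat \<Rightarrow> nat \<Rightarrow> ((nat \<Rightarrow> nat \<Rightarrow> complex) \<Rightarrow> bool) \<Rightarrow> ((nat \<Rightarrow> nat \<Rightarrow> complex) \<Rightarrow> complex) \<Rightarrow> bool" where
  "RR m n D f \<longleftrightarrow> (\<exists>p q. nonneg_poly m n p \<and> nonneg_poly m n q \<and>
     (\<forall>y. D y \<longrightarrow> poly_eval m n q y \<noteq> 0 \<and> f y * poly_eval m n q y = poly_eval m n p y))"

lemma rep_poly_eval: "nonneg_poly m n p \<Longrightarrow> rep m n (poly_eval m n p)"
  unfolding rep_def by blast

lemma RR_ratio:
  assumes "rep m n N" "rep m n Dn" "\<And>y. D y \<Longrightarrow> Dn y \<noteq> 0"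
  shows "RR m n D (\<lambda>y. N y / Dn y)"
proof -
  obtain p where p: "nonneg_poly m n p" "\<And>y. N y = poly_eval m n p y" using assms(1) unfolding rep_def by auto
  obtain q where q: "nonneg_poly m n q" "\<And>y. Dn y = poly_eval m n q y" using assms(2) unfolding rep_def by auto
  show ?thesis unfolding RR_def
    by (rule exI[of _ p], rule exI[of _ q]) (use p q assms(3) in \<open>auto\<close>)
qed

lemma RR_add:
  assumes "RR m n D f" "RR m n D g"
  shows "RR m n D (\<lambda>y. f y + g y)"
proof -
  obtain p1 q1 where 1: "nonneg_poly m n p1" "nonneg_poly m n q1"
    "\<And>y. D y \<Longrightarrow> poly_eval m n q1 y \<noteq> 0 \<and> f y * poly_eval m n q1 y = poly_eval m n p1 y"
    using assms(1) unfolding RR_def by blast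
  obtain p2 q2 where 2: "nonneg_poly m n p2" "nonneg_poly m n q2"
    "\<And>y. D y \<Longrightarrow> poly_eval m n q2 y \<noteq> 0 \<and> g y * poly_eval m n q2 y = poly_eval m n p2 y"
    using assms(2) unfolding RR_def by blast
  have "rep m n (\<lambda>y. poly_eval m n q1 y * poly_eval m n q2 y)"
    by (intro rep_mult rep_poly_eval 1 2)
  then obtain q where q: "nonneg_poly m n q" "\<And>y. poly_eval m n q1 y * poly_eval m n q2 y = poly_eval m n q y"
    unfolding rep_def by auto
  have "rep m n (\<lambda>y. poly_eval m n p1 y * poly_eval m n q2 y + poly_eval m n p2 y * poly_eval m n q1 y)"
    by (intro rep_add rep_mult rep_poly_eval 1 2)
  then obtain p where p: "nonneg_poly m n p" "\<And>y. poly_eval m n p1 y * poly_eval m n q2 y + poly_eval m n p2 y * poly_eval m n q1 y = poly_eval m n p y"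
    unfolding rep_def by auto
  have "poly_eval m n q y \<noteq> 0 \<and> (f y + g y) * poly_eval m n q y = poly_eval m n p y" if "D y" for y
  proof -
    have a: "poly_eval m n q1 y \<noteq> 0" "f y * poly_eval m n q1 y = poly_eval m n p1 y" using 1(3)[OF that] by auto
    have b: "poly_eval m n q2 y \<noteq> 0" "g y * poly_eval m n q2 y = poly_eval m n p2 y" using 2(3)[OF that] by auto
    have "(f y + g y) * poly_eval m n q y = (f y * poly_eval m n q1 y) * poly_eval m n q2 y + (g y * poly_eval m n q2 y) * poly_eval m n q1 y"
      unfolding q(2)[symmetric] by (simp add: algebra_simps)
    also have "\<dots> = poly_eval m n p y" unfolding a(2) b(2) p(2) ..
    moreover have "poly_eval m n q y \<noteq> 0" using a(1) b(1) q(2)[of y] by (metis mult_eq_0_iff)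
    ultimately show ?thesis by simp
  qed
  then show ?thesis unfolding RR_def using p(1) q(1) by blast
qed

lemma RR_zero: "RR m n D (\<lambda>y. 0)"
proof -
  have r0: "rep m n (\<lambda>y. of_real 0)" by (rule rep_const) simp
  have r1: "rep m n (\<lambda>y. of_real 1)" by (rule rep_const) simp
  have "RR m n D (\<lambda>y. of_real 0 / of_real 1)"
    by (rule RR_ratio[OF r0 r1]) simp
  then show ?thesis by simp
qed

lemma RR_cong: "RR m n D f \<Longrightarrow> (\<And>y. D y \<Longrightarrow> f y = g y) \<Longrightarrow> RR m n D g"
  unfolding RR_def by metis

lemma RR_sum:
  assumes "finite I" "\<And>i. i \<in> I \<Longrightarrow> RR m n D (f i)"
  shows "RR m n D (\<lambda>y. \<Sum>i\<in>I. f i y)"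
  using assms
proof (induction I rule: finite_induct)
  case empty then show ?case using RR_zero by simp
next
  case (insert i I)
  have "RR m n D (\<lambda>y. f i y + (\<Sum>i\<in>I. f i y))" by (rule RR_add) (use insert in auto)
  then show ?case by (rule RR_cong) (use insert in simp)
qed

lemma RR_if: "(c \<Longrightarrow> RR m n D f) \<Longrightarrow> RR m n D (\<lambda>y. if c then f y else 0)"
  using RR_zero by (cases c) auto


lemma RR_quot4:
  assumes "rep m n A" "rep m n B" "rep m n C" "rep m n Dd" "\<And>y. D y \<Longrightarrow> B y \<noteq> 0 \<and> C y \<noteq> 0"
  shows "RR m n D (\<lambda>y. (A y / B y) / (C y / Dd y))"
proof -
  have "RR m n D (\<lambda>y. (A y * Dd y) / (B y * C y))"
    by (rule RR_ratio) (use assms in \<open>auto intro: rep_mult\<close>)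
  then show ?thesis by (rule RR_cong) simp
qed

lemma conj2:
  fixes m n :: nat and x :: "nat \<Rightarrow> nat \<Rightarrow> complex"
  assumes m1: "1 \<le> m" and n1: "1 \<le> n"
    and xnz: "\<forall>a j. 1 \<le> a \<and> a \<le> m \<and> 1 \<le> j \<and> j \<le> n \<longrightarrow> x a j \<noteq> 0"
    and dom: "gRSK_defined m n x"
  shows "\<exists>p q. nonneg_poly m n p \<and> nonneg_poly m n q \<and> (\<exists>e. q e \<noteq> 0) \<and>
           (\<forall>y. (\<forall>a j. 1 \<le> a \<and> a \<le> m \<and> 1 \<le> j \<and> j \<le> n \<longrightarrow> y a j \<noteq> 0) \<and> gRSK_defined m n y
                \<longrightarrow> central_charge m n y * poly_eval m n q y = poly_eval m n p y)"
proof -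
  define D where "D y \<longleftrightarrow> (\<forall>a j. 1 \<le> a \<and> a \<le> m \<and> 1 \<le> j \<and> j \<le> n \<longrightarrow> y a j \<noteq> 0) \<and> gRSK_defined m n y" for y
  have mr: "rep m n (\<lambda>y. minor_int i n (Mprod n y l))" if "l \<le> m" "1 \<le> i" for l i
    by (rule minor_rep) (use that in auto)
  have dQ: "minor_int j' n (Mprod n y i') \<noteq> 0 \<and> minor_int (j' + 1) n (Mprod n y i') \<noteq> 0"
    if "D y" "1 \<le> j'" "j' \<le> n" "j' \<le> i'" "i' \<le> m" for y j' i'
    using that unfolding D_def gRSK_defined_def by auto
  have dP: "minor_int (n + 1) n (Mprod n y m) \<noteq> 0" if "D y" "m = n" for y
    using that n1 unfolding D_def gRSK_defined_def by auto
  have t1: "RR m n D (\<lambda>y. gRSK_Q m n y i (j + 1) / gRSK_Q m n y i j)" if "i \<in> {1..n}" "j \<in> {i..m - 1}" for i j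
    unfolding gRSK_Q_def
    by (rule RR_quot4) (use that mr dQ in \<open>auto simp del: Mprod.simps\<close>)
  have t2: "RR m n D (\<lambda>y. gRSK_Q m n y i j / gRSK_Q m n y (i + 1) (j + 1))" if "i \<in> {1..n - 1}" "j \<in> {i..m - 1}" for i j
    unfolding gRSK_Q_def
    by (rule RR_quot4) (use that mr dQ in \<open>auto simp del: Mprod.simps\<close>)
  have t3: "RR m n D (\<lambda>y. if n < m then gRSK_Q m n y n n else 0)"
  proof (rule RR_if)
    assume "n < m"
    show "RR m n D (\<lambda>y. gRSK_Q m n y n n)"
      unfolding gRSK_Q_def by (rule RR_ratio) (use \<open>n < m\<close> mr dQ n1 in auto)
  qed
  have t4: "RR m n D (\<lambda>y. if m = n then gRSK_P m n y n n else 0)"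
  proof (rule RR_if)
    assume "m = n"
    show "RR m n D (\<lambda>y. gRSK_P m n y n n)"
      unfolding gRSK_P_def by (rule RR_ratio) (use \<open>m = n\<close> mr dP n1 in auto)
  qed
  have "RR m n D (\<lambda>y. F_GT m n (gRSK_Q m n y) + (if m = n then gRSK_P m n y n n else 0))"
    unfolding F_GT_def
    by (intro RR_add RR_sum t1 t2 t3 t4 finite_atLeastAtMost)
  then have "RR m n D (central_charge m n)"
  proof (rule RR_cong)
    fix y assume "D y"
    then show "F_GT m n (gRSK_Q m n y) + (if m = n then gRSK_P m n y n n else 0) = central_charge m n y"
      using conj1[OF m1 n1] unfolding D_def by auto
  qed
  then obtain p q where pq: "nonneg_poly m n p" "nonneg_poly m n q"
    "\<And>y. D y \<Longrightarrow> poly_eval m n q y \<noteq> 0 \<and> central_charge m n y * poly_eval m n q y = poly_eval m n p y"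
    unfolding RR_def by blast
  have "D x" unfolding D_def using xnz dom by auto
  then have "poly_eval m n q x \<noteq> 0" using pq(3) by auto
  then have "\<exists>e. q e \<noteq> 0"
  proof (rule contrapos_np)
    assume "\<not> (\<exists>e. q e \<noteq> 0)"
    then have "{e. q e \<noteq> 0} = {}" by auto
    then show "poly_eval m n q x = 0" unfolding poly_eval_def by simp
  qed
  then show ?thesis using pq unfolding D_def by blast
qed

theorem proposition4p14:
  fixes m n :: nat and x :: "nat \<Rightarrow> nat \<Rightarrow> complex"
  assumes "1 \<le> m" and "1 \<le> n"
    and "\<forall>a j. 1 \<le> a \<and> a \<le> m \<and> 1 \<le> j \<and> j \<le> n \<longrightarrow> x a j \<noteq> 0"
    and "gRSK_defined m n x"
  shows "central_charge m n x
           = F_GT m n (gRSK_Q m n x) + (if m = n then gRSK_P m n x n n else 0)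
         \<and> (\<exists>p q. nonneg_poly m n p \<and> nonneg_poly m n q \<and> (\<exists>e. q e \<noteq> 0) \<and>
           (\<forall>y. (\<forall>a j. 1 \<le> a \<and> a \<le> m \<and> 1 \<le> j \<and> j \<le> n \<longrightarrow> y a j \<noteq> 0) \<and> gRSK_defined m n y
                \<longrightarrow> central_charge m n y * poly_eval m n q y = poly_eval m n p y))"
  using conj1[OF assms] conj2[OF assms] by blast


end
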